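(* Let $\alpha=1.56$ and define, for $x\in[0,1]$, $\mathrm{budget}^+(x)=\frac{\alpha}{1-\alpha/2}\cdot\frac{x^2}{1+x}$ and $\mathrm{budget}^-(x)=\frac{\alpha}{1-\alpha/2}\cdot\frac{(1+2x)(1-x)}{2(1+x)}$. Let $(z,x)$ be a feasible solution of the cluster LP for a Correlation Clustering instance $(V,E^+\uplus E^-)$. For $vw\in\binom V2$ let $b_{vw}=\mathrm{budget}^+(x_{vw})$ if $vw\in E^+$ and $b_{vw}=\mathrm{budget}^-(x_{vw})$ if $vw\in E^-$. For $V'\subseteq V$ and a pivot $u\in V'$, define the random cluster $C\subseteq V'$ as follows: start with $C=\{u\}$; sample a set $S\ni u$ with probability $z_S$; for each $v\in V'$ with $uv\in E^+$, add $v$ to $C$ if $x_{uv}\le 0.4$, and otherwise add $v$ to $C$ if and only if $v\in S$; for each $v\in V'$ with $uv\in E^-$, add $v$ to $C$ with probability $1-x_{uv}$, independently of everything else. For distinct $u,v,w\in V'$ let $\mathrm{cost}_u(v,w)$ be the probability (with pivot $u$) that either $vw\in E^+$ and $|C\cap\{v,w\}|=1$, or $vw\in E^-$ and $\{v,w\}\subseteq C$; and let $\Delta_u(v,w)=\Pr[C\cap\{v,w\}\neq\emptyset]\cdot b_{vw}$ (with pivot $u$). (These quantities do not depend on $V'$ as long as $u,v,w\in V'$.) For a triangle $T=\{u,v,w\}$ of three distinct vertices let $\mathrm{cost}(T)=\mathrm{cost}_u(v,w)+\mathrm{cost}_v(u,w)+\mathrm{cost}_w(u,v)$ and $\Delta(T)=\Delta_u(v,w)+\Delta_v(u,w)+\Delta_w(u,v)$.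 Then $\mathrm{cost}(T)\le\Delta(T)$ for every triangle $T$.
   Context: A Correlation Clustering instance consists of a finite vertex set $V$ and a partition $E^+\uplus E^-=\binom V2$ of the unordered pairs of distinct vertices into $+$edges and $-$edges. The cluster LP has a variable $z_S$ for every nonempty $S\subseteq V$ and $x_{uv}$ for every $uv\in\binom V2$, with constraints $\sum_{S\ni u}z_S=1$ for all $u\in V$, $\sum_{S\supseteq\{u,v\}}z_S=1-x_{uv}$ for all $uv$, and $z_S\ge0$; in particular $(z_S)_{S\ni u}$ is a probability distribution for each $u$. *)

theory Defs
  imports Complex_Main
begin

text \<open>Correlation clustering: vertex set V, the +edges Ep are a set of
  unordered pairs {u,v} (u \<noteq> v); every other pair of distinct vertices is a -edge.\<close>

definition cluster_LP_feasible ::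
  "'a set \<Rightarrow> ('a set \<Rightarrow> real) \<Rightarrow> ('a set \<Rightarrow> real) \<Rightarrow> bool" where
  "cluster_LP_feasible V z x \<longleftrightarrow>
     (\<forall>S. S \<subseteq> V \<and> S \<noteq> {} \<longrightarrow> z S \<ge> 0) \<and>
     (\<forall>u\<in>V. (\<Sum>S\<in>{S. S \<subseteq> V \<and> u \<in> S}. z S) = 1) \<and>
     (\<forall>u\<in>V. \<forall>v\<in>V. u \<noteq> v \<longrightarrow>
        (\<Sum>S\<in>{S. S \<subseteq> V \<and> {u,v} \<subseteq> S}. z S) = 1 - x {u,v})"

definition alpha :: real where "alpha = 156/100"

definition budget_plus :: "real \<Rightarrow> real" where
  "budget_plus t = alpha / (1 - alpha/2) * (t\<^sup>2 / (1 + t))"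

definition budget_minus :: "real \<Rightarrow> real" where
  "budget_minus t = alpha / (1 - alpha/2) * ((1 + 2*t) * (1 - t) / (2 * (1 + t)))"

definition budget :: "'a set set \<Rightarrow> ('a set \<Rightarrow> real) \<Rightarrow> 'a \<Rightarrow> 'a \<Rightarrow> real" where
  "budget Ep x v w = (if {v,w} \<in> Ep then budget_plus (x {v,w}) else budget_minus (x {v,w}))"

text \<open>Probability that v joins the cluster of pivot u, conditioned on the sampled set S.
  Conditioned on S, the memberships of distinct non-pivot vertices are independent.\<close>
definition incl_prob :: "'a set set \<Rightarrow> ('a set \<Rightarrow> real) \<Rightarrow> 'a \<Rightarrow> 'a set \<Rightarrow> 'a \<Rightarrow> real" where
  "incl_prob Ep x u S v =
     (if {u,v} \<in> Ep then (if x {u,v} \<le> 2/5 \<or> v \<in> S then 1 else 0)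
      else 1 - x {u,v})"

definition cost_piv ::
  "'a set \<Rightarrow> 'a set set \<Rightarrow> ('a set \<Rightarrow> real) \<Rightarrow> ('a set \<Rightarrow> real) \<Rightarrow> 'a \<Rightarrow> 'a \<Rightarrow> 'a \<Rightarrow> real" where
  "cost_piv V Ep z x u v w =
     (\<Sum>S\<in>{S. S \<subseteq> V \<and> u \<in> S}. z S *
        (let pv = incl_prob Ep x u S v; pw = incl_prob Ep x u S w in
         if {v,w} \<in> Ep then pv * (1 - pw) + (1 - pv) * pw else pv * pw))"

definition delta_piv ::
  "'a set \<Rightarrow> 'a set set \<Rightarrow> ('a set \<Rightarrow> real) \<Rightarrow> ('a set \<Rightarrow> real) \<Rightarrow> 'a \<Rightarrow> 'a \<Rightarrow> 'a \<Rightarrow> real" where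
  "delta_piv V Ep z x u v w =
     (\<Sum>S\<in>{S. S \<subseteq> V \<and> u \<in> S}. z S *
        (1 - (1 - incl_prob Ep x u S v) * (1 - incl_prob Ep x u S w))) * budget Ep x v w"

definition cost_tri ::
  "'a set \<Rightarrow> 'a set set \<Rightarrow> ('a set \<Rightarrow> real) \<Rightarrow> ('a set \<Rightarrow> real) \<Rightarrow> 'a \<Rightarrow> 'a \<Rightarrow> 'a \<Rightarrow> real" where
  "cost_tri V Ep z x u v w =
     cost_piv V Ep z x u v w + cost_piv V Ep z x v u w + cost_piv V Ep z x w u v"

definition delta_tri ::
  "'a set \<Rightarrow> 'a set set \<Rightarrow> ('a set \<Rightarrow> real) \<Rightarrow> ('a set \<Rightarrow> real) \<Rightarrow> 'a \<Rightarrow> 'a \<Rightarrow> 'a \<Rightarrow> real" where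
  "delta_tri V Ep z x u v w =
     delta_piv V Ep z x u v w + delta_piv V Ep z x v u w + delta_piv V Ep z x w u v"

end

theory Submission
  imports Defs
begin

datatype kind = Mi | Sm | La

fun piK :: "kind \<Rightarrow> real \<Rightarrow> real" where
  "piK Sm y = 1"
| "piK Mi y = y"
| "piK La y = y"

fun QK :: "kind \<Rightarrow> kind \<Rightarrow> real \<Rightarrow> real \<Rightarrow> real \<Rightarrow> real" where
  "QK La La yv yw t = t"
| "QK kv kw yv yw t = piK kv yv * piK kw yw"

fun costK :: "kind \<Rightarrow> kind \<Rightarrow> kind \<Rightarrow> real \<Rightarrow> real \<Rightarrow> real \<Rightarrow> real" where
  "costK kv kw Mi yv yw t = QK kv kw yv yw t"
| "costK kv kw Sm yv yw t = piK kv yv + piK kw yw - 2 * QK kv kw yv yw t"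
| "costK kv kw La yv yw t = piK kv yv + piK kw yw - 2 * QK kv kw yv yw t"

definition AK :: "kind \<Rightarrow> kind \<Rightarrow> real \<Rightarrow> real \<Rightarrow> real \<Rightarrow> real" where
  "AK kv kw yv yw t = piK kv yv + piK kw yw - QK kv kw yv yw t"

fun NK :: "kind \<Rightarrow> real \<Rightarrow> real" where
  "NK Mi x = 78 * (1 + 2*x) * (1 - x)"
| "NK Sm x = 156 * x^2"
| "NK La x = 156 * x^2"

definition Poly :: "kind \<Rightarrow> kind \<Rightarrow> kind \<Rightarrow> real \<Rightarrow> real \<Rightarrow> real \<Rightarrow> real \<Rightarrow> real" where
  "Poly k1 k2 k3 x1 x2 x3 t =
     (costK k1 k2 k3 (1-x1) (1-x2) t + costK k1 k3 k2 (1-x1) (1-x3) t + costK k2 k3 k1 (1-x2) (1-x3) t)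
       * (22 * (1+x1) * (1+x2) * (1+x3))
     - AK k1 k2 (1-x1) (1-x2) t * NK k3 x3 * ((1+x1)*(1+x2))
     - AK k1 k3 (1-x1) (1-x3) t * NK k2 x2 * ((1+x1)*(1+x3))
     - AK k2 k3 (1-x2) (1-x3) t * NK k1 x1 * ((1+x2)*(1+x3))"

lemma QK_sym: "QK kv kw yv yw t = QK kw kv yw yv t"
  by (cases kv; cases kw; simp)

lemma costK_sym: "costK kv kw ko yv yw t = costK kw kv ko yw yv t"
  by (cases ko; simp add: QK_sym[of kv kw])

lemma AK_sym: "AK kv kw yv yw t = AK kw kv yw yv t"
  unfolding AK_def by (simp add: QK_sym[of kv kw])

lemma Poly_sym12: "Poly k1 k2 k3 x1 x2 x3 t = Poly k2 k1 k3 x2 x1 x3 t"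
  unfolding Poly_def
  by (simp add: costK_sym[of k1 k2] AK_sym[of k1 k2] algebra_simps)

lemma Poly_sym23: "Poly k1 k2 k3 x1 x2 x3 t = Poly k1 k3 k2 x1 x3 x2 t"
  unfolding Poly_def
  by (simp add: costK_sym[of k3 k2] AK_sym[of k3 k2] algebra_simps)

definition okK :: "kind \<Rightarrow> real \<Rightarrow> bool" where
  "okK k x \<longleftrightarrow> 0 \<le> x \<and> x \<le> 1 \<and> (k = Sm \<longrightarrow> x \<le> 2/5) \<and> (k = La \<longrightarrow> 2/5 \<le> x)"

definition triC :: "real \<Rightarrow> real \<Rightarrow> real \<Rightarrow> real \<Rightarrow> bool" where
  "triC x1 x2 x3 t \<longleftrightarrow> 0 \<le> t \<and> t \<le> 1 - x1 \<and> t \<le> 1 - x2 \<and> t \<le> 1 - x3 \<and>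
     1 - x1 - x2 \<le> t \<and> 1 - x1 - x3 \<le> t \<and> 1 - x2 - x3 \<le> t"

lemma triC_12: "triC x1 x2 x3 t \<Longrightarrow> triC x2 x1 x3 t" unfolding triC_def by linarith
lemma triC_23: "triC x1 x2 x3 t \<Longrightarrow> triC x1 x3 x2 t" unfolding triC_def by linarith

fun rk :: "kind \<Rightarrow> nat" where "rk Mi = 0" | "rk Sm = 1" | "rk La = 2"


lemma c_mmm:
  assumes "okK Mi x1" "okK Mi x2" "okK Mi x3" "triC x1 x2 x3 t"
  shows "Poly Mi Mi Mi x1 x2 x3 t \<le> 0"
proof -
  have A: "0 \<le> x1" "x1 \<le> 1" "0 \<le> x2" "x2 \<le> 1" "0 \<le> x3" "x3 \<le> 1"
    "0 \<le> t" "t \<le> 1 - x1" "t \<le> 1 - x2" "t \<le> 1 - x3" "1 - x1 - x2 \<le> t" "1 - x1 - x3 \<le> t" "1 - x2 - x3 \<le> t"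
    using assms unfolding okK_def triC_def by auto
  have B: True by simp
  define g0 where "g0 = x1"
  have n0: "0 \<le> g0" unfolding g0_def using A B by linarith
  define g1 where "g1 = 1 - x1"
  have n1: "0 \<le> g1" unfolding g1_def using A B by linarith
  define g2 where "g2 = x2"
  have n2: "0 \<le> g2" unfolding g2_def using A B by linarith
  define g3 where "g3 = 1 - x2"
  have n3: "0 \<le> g3" unfolding g3_def using A B by linarith
  define g4 where "g4 = x3"
  have n4: "0 \<le> g4" unfolding g4_def using A B by linarith
  define g5 where "g5 = 1 - x3"
  have n5: "0 \<le> g5" unfolding g5_def using A B by linarith
  define g6 where "g6 = x2 + x3 - x1"
  have n6: "0 \<le> g6" unfolding g6_def using A B by linarith
  define g7 where "g7 = x1 + x3 - x2"
  have n7: "0 \<le> g7" unfolding g7_def using A B by linarith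
  define g8 where "g8 = x1 + x2 - x3"
  have n8: "0 \<le> g8" unfolding g8_def using A B by linarith
  have id: "-(Poly Mi Mi Mi x1 x2 x3 t) = (648) * (g0 * g0 * g3 * g4 * g5) + (100) * (g0 * g2 * g3 * g5 * g7) + (156) * (g1 * g2 * g3) + (268) * (g1 * g2 * g3 * g4) + (144) * (g1 * g3 * g4) + (100) * (g1 * g2 * g2 * g2 * g5) + (12) * (g1 * g2 * g2 * g5) + (424) * (g0 * g1 * g3) + (468) * (g0 * g0 * g2 * g3 * g4 * g5) + (580) * (g0 * g1 * g2 * g3) + (100) * (g2 * g3 * g5 * g8) + (580) * (g0 * g1 * g2 * g2 * g5) + (548) * (g0 * g1 * g4 * g5) + (156) * (g1 * g5 * g6) + (244) * (g1 * g2 * g4 * g5) + (156) * (g0 * g3 * g5 * g8) + (68) * (g3 * g5 * g8) + (112) * (g0 * g2 * g3 * g4 * g5) + (44) * (g3 * g5) + (24) * (g1 * g4 * g5) + (32) * (g0 * g1 * g2 * g4 * g5) + (124) * (g1 * g3)"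
    unfolding Poly_def AK_def costK.simps QK.simps piK.simps NK.simps g0_def g1_def g2_def g3_def g4_def g5_def g6_def g7_def g8_def by algebra
  have nn: "0 \<le> (648) * (g0 * g0 * g3 * g4 * g5) + (100) * (g0 * g2 * g3 * g5 * g7) + (156) * (g1 * g2 * g3) + (268) * (g1 * g2 * g3 * g4) + (144) * (g1 * g3 * g4) + (100) * (g1 * g2 * g2 * g2 * g5) + (12) * (g1 * g2 * g2 * g5) + (424) * (g0 * g1 * g3) + (468) * (g0 * g0 * g2 * g3 * g4 * g5) + (580) * (g0 * g1 * g2 * g3) + (100) * (g2 * g3 * g5 * g8) + (580) * (g0 * g1 * g2 * g2 * g5) + (548) * (g0 * g1 * g4 * g5) + (156) * (g1 * g5 * g6) + (244) * (g1 * g2 * g4 * g5) + (156) * (g0 * g3 * g5 * g8) + (68) * (g3 * g5 * g8) + (112) * (g0 * g2 * g3 * g4 * g5) + (44) * (g3 * g5) + (24) * (g1 * g4 * g5) + (32) * (g0 * g1 * g2 * g4 * g5) + (124) * (g1 * g3)"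
    by (intro add_nonneg_nonneg mult_nonneg_nonneg divide_nonneg_nonneg zero_le_numeral zero_le_one n0 n1 n2 n3 n4 n5 n6 n7 n8)
  show ?thesis using id nn by linarith
qed

lemma c_mms:
  assumes "okK Mi x1" "okK Mi x2" "okK Sm x3" "triC x1 x2 x3 t"
  shows "Poly Mi Mi Sm x1 x2 x3 t \<le> 0"
proof -
  have A: "0 \<le> x1" "x1 \<le> 1" "0 \<le> x2" "x2 \<le> 1" "0 \<le> x3" "x3 \<le> 1"
    "0 \<le> t" "t \<le> 1 - x1" "t \<le> 1 - x2" "t \<le> 1 - x3" "1 - x1 - x2 \<le> t" "1 - x1 - x3 \<le> t" "1 - x2 - x3 \<le> t"
    using assms unfolding okK_def triC_def by auto
  have B: "x3 \<le> 2/5"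
    using assms unfolding okK_def by auto
  define g0 where "g0 = x1"
  have n0: "0 \<le> g0" unfolding g0_def using A B by linarith
  define g1 where "g1 = 1 - x1"
  have n1: "0 \<le> g1" unfolding g1_def using A B by linarith
  define g2 where "g2 = x2"
  have n2: "0 \<le> g2" unfolding g2_def using A B by linarith
  define g3 where "g3 = 1 - x2"
  have n3: "0 \<le> g3" unfolding g3_def using A B by linarith
  define g4 where "g4 = x3"
  have n4: "0 \<le> g4" unfolding g4_def using A B by linarith
  define g6 where "g6 = x2 + x3 - x1"
  have n6: "0 \<le> g6" unfolding g6_def using A B by linarith
  define g7 where "g7 = x1 + x3 - x2"
  have n7: "0 \<le> g7" unfolding g7_def using A B by linarith
  define g8 where "g8 = x1 + x2 - x3"
  have n8: "0 \<le> g8" unfolding g8_def using A B by linarith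
  define g9 where "g9 = 2/5 - x3"
  have n9: "0 \<le> g9" unfolding g9_def using A B by linarith
  have id: "-(Poly Mi Mi Sm x1 x2 x3 t) = (77/5) * (g3 * g8) + (11/10) * (g0 * g2 * g3 * g7) + (66/5) * (g1 * g1 * g8 * g8) + (55/2) * (g0 * g0 * g3 * g4 * g7) + (693/40) * (g0 * g1 * g4 * g6) + (121/10) * (g0 * g0 * g1 * g7) + (209/8) * (g0 * g1 * g4 * g4 * g6) + (833/40) * (g0 * g3 * g4 * g6) + (11/2) * (g0 * g1 * g4 * g6 * g6) + (4139/20) * (g0 * g1 * g4 * g4) + (209/10) * (g0 * g1 * g2) + (66/5) * (g0 * g1 * g6) + (191) * (g0 * g0 * g3 * g4 * g4) + (691/10) * (g1 * g2) + (112) * (g1) + (11/2) * (g0 * g2 * g3 * g4 * g6) + (55/8) * (g0 * g2 * g3 * g4 * g4 * g7) + (33/2) * (g0 * g3 * g4 * g4 * g8) + (9917/40) * (g1 * g4 * g4) + (176/5) * (g0 * g1 * g2 * g7) + (525/4) * (g0 * g2 * g3 * g4 * g4) + (659/8) * (g0 * g2 * g3 * g4) + (77/8) * (g0 * g0 * g1 * g4) + (753/4) * (g0 * g3 * g4 * g4) + (6067/40) * (g0 * g1 * g4) + (406/5) * (g0 * g1) + (11/10) * (g2 * g2 * g3) + (11/2) * (g2 * g3 * g4 * g7) + (121/5) * (g1 * g4 * g7) + (637/5) * (g1 * g7) + (1549/10) * (g2 * g3) + (759/40) * (g1 * g4 * g4 * g4) + (143/8) * (g3 * g4 * g4 * g8)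 + (55/8) * (g2 * g3 * g4 * g4 * g8) + (165/8) * (g0 * g0 * g3 * g4 * g4 * g6) + (143/8) * (g2 * g3 * g4) + (55/8) * (g1 * g8 * g8 * g8 * g9 * g9) + (55/8) * (g0 * g3 * g4 * g4 * g4 * g8) + (55/8) * (g0 * g1 * g4 * g4 * g6 * g8) + (55/8) * (g1 * g4 * g4 * g4 * g8 * g8) + (55/8) * (g3 * g4 * g4 * g4 * g7) + (99/8) * (g1 * g4 * g4 * g4 * g8) + (101) * (g0 * g0 * g2 * g3 * g4 * g4) + (5173/40) * (g3 * g4 * g8) + (263/5) * (g0 * g3 * g8)"
    unfolding Poly_def AK_def costK.simps QK.simps piK.simps NK.simps g0_def g1_def g2_def g3_def g4_def g6_def g7_def g8_def g9_def by algebra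
  have nn: "0 \<le> (77/5) * (g3 * g8) + (11/10) * (g0 * g2 * g3 * g7) + (66/5) * (g1 * g1 * g8 * g8) + (55/2) * (g0 * g0 * g3 * g4 * g7) + (693/40) * (g0 * g1 * g4 * g6) + (121/10) * (g0 * g0 * g1 * g7) + (209/8) * (g0 * g1 * g4 * g4 * g6) + (833/40) * (g0 * g3 * g4 * g6) + (11/2) * (g0 * g1 * g4 * g6 * g6) + (4139/20) * (g0 * g1 * g4 * g4) + (209/10) * (g0 * g1 * g2) + (66/5) * (g0 * g1 * g6) + (191) * (g0 * g0 * g3 * g4 * g4) + (691/10) * (g1 * g2) + (112) * (g1) + (11/2) * (g0 * g2 * g3 * g4 * g6) + (55/8) * (g0 * g2 * g3 * g4 * g4 * g7) + (33/2) * (g0 * g3 * g4 * g4 * g8) + (9917/40) * (g1 * g4 * g4) + (176/5) * (g0 * g1 * g2 * g7) + (525/4) * (g0 * g2 * g3 * g4 * g4) + (659/8) * (g0 * g2 * g3 * g4) + (77/8) * (g0 * g0 * g1 * g4) + (753/4) * (g0 * g3 * g4 * g4) + (6067/40) * (g0 * g1 * g4) + (406/5) * (g0 * g1) + (11/10) * (g2 * g2 * g3) + (11/2) * (g2 * g3 * g4 * g7) + (121/5) * (g1 * g4 * g7) + (637/5) * (g1 * g7) + (1549/10) * (g2 * g3) + (759/40) * (g1 * g4 * g4 * g4) + (143/8) * (g3 * g4 * g4 * g8) + (55/8) * (g2 * g3 * g4 * g4 * g8) + (165/8) * (g0 * g0 * g3 * g4 * g4 * g6) + (143/8) * (g2 *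 g3 * g4) + (55/8) * (g1 * g8 * g8 * g8 * g9 * g9) + (55/8) * (g0 * g3 * g4 * g4 * g4 * g8) + (55/8) * (g0 * g1 * g4 * g4 * g6 * g8) + (55/8) * (g1 * g4 * g4 * g4 * g8 * g8) + (55/8) * (g3 * g4 * g4 * g4 * g7) + (99/8) * (g1 * g4 * g4 * g4 * g8) + (101) * (g0 * g0 * g2 * g3 * g4 * g4) + (5173/40) * (g3 * g4 * g8) + (263/5) * (g0 * g3 * g8)"
    by (intro add_nonneg_nonneg mult_nonneg_nonneg divide_nonneg_nonneg zero_le_numeral zero_le_one n0 n1 n2 n3 n4 n6 n7 n8 n9)
  show ?thesis using id nn by linarith
qed

lemma c_mml:
  assumes "okK Mi x1" "okK Mi x2" "okK La x3" "triC x1 x2 x3 t"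
  shows "Poly Mi Mi La x1 x2 x3 t \<le> 0"
proof -
  have A: "0 \<le> x1" "x1 \<le> 1" "0 \<le> x2" "x2 \<le> 1" "0 \<le> x3" "x3 \<le> 1"
    "0 \<le> t" "t \<le> 1 - x1" "t \<le> 1 - x2" "t \<le> 1 - x3" "1 - x1 - x2 \<le> t" "1 - x1 - x3 \<le> t" "1 - x2 - x3 \<le> t"
    using assms unfolding okK_def triC_def by auto
  have B: "2/5 \<le> x3"
    using assms unfolding okK_def by auto
  define g0 where "g0 = x1"
  have n0: "0 \<le> g0" unfolding g0_def using A B by linarith
  define g1 where "g1 = 1 - x1"
  have n1: "0 \<le> g1" unfolding g1_def using A B by linarith
  define g2 where "g2 = x2"
  have n2: "0 \<le> g2" unfolding g2_def using A B by linarith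
  define g3 where "g3 = 1 - x2"
  have n3: "0 \<le> g3" unfolding g3_def using A B by linarith
  define g4 where "g4 = x3"
  have n4: "0 \<le> g4" unfolding g4_def using A B by linarith
  define g5 where "g5 = 1 - x3"
  have n5: "0 \<le> g5" unfolding g5_def using A B by linarith
  define g6 where "g6 = x2 + x3 - x1"
  have n6: "0 \<le> g6" unfolding g6_def using A B by linarith
  define g9 where "g9 = x3 - 2/5"
  have n9: "0 \<le> g9" unfolding g9_def using A B by linarith
  have id: "-(Poly Mi Mi La x1 x2 x3 t) = (16) * (g1 * g3) + (1456/5) * (g1 * g2 * g3) + (90) * (g0 * g3 * g4 * g9) + (68) * (g1) + (36) * (g1 * g4) + (100) * (g0 * g2 * g3 * g4 * g4) + (344) * (g0 * g1 * g2 * g5) + (1492/5) * (g0 * g1 * g3) + (110) * (g0 * g3 * g9 * g9) + (652/5) * (g0 * g0 * g3 * g3 * g4) + (200) * (g1 * g4 * g9) + (44) * (g0 * g1 * g4 * g4) + (100) * (g2 * g3 * g4 * g9) + (1908/5) * (g0 * g0 * g2 * g3 * g5) + (300) * (g0 * g1 * g9) + (56) * (g0 * g0 * g3 * g4 * g5) + (432/5) * (g0 * g1 * g3 * g4) + (2128/5) * (g0 * g1 * g2 * g3) + (228) * (g1 * g3 * g4) + (156) * (g0 * g0 * g2 * g3 * g4 * g5) + (28) * (g3 * g3 * g5) + (268) * (g2 * g3 * g9) + (56) * (g0 * g3 * g6 * g9)"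
    unfolding Poly_def AK_def costK.simps QK.simps piK.simps NK.simps g0_def g1_def g2_def g3_def g4_def g5_def g6_def g9_def by algebra
  have nn: "0 \<le> (16) * (g1 * g3) + (1456/5) * (g1 * g2 * g3) + (90) * (g0 * g3 * g4 * g9) + (68) * (g1) + (36) * (g1 * g4) + (100) * (g0 * g2 * g3 * g4 * g4) + (344) * (g0 * g1 * g2 * g5) + (1492/5) * (g0 * g1 * g3) + (110) * (g0 * g3 * g9 * g9) + (652/5) * (g0 * g0 * g3 * g3 * g4) + (200) * (g1 * g4 * g9) + (44) * (g0 * g1 * g4 * g4) + (100) * (g2 * g3 * g4 * g9) + (1908/5) * (g0 * g0 * g2 * g3 * g5) + (300) * (g0 * g1 * g9) + (56) * (g0 * g0 * g3 * g4 * g5) + (432/5) * (g0 * g1 * g3 * g4) + (2128/5) * (g0 * g1 * g2 * g3) + (228) * (g1 * g3 * g4) + (156) * (g0 * g0 * g2 * g3 * g4 * g5) + (28) * (g3 * g3 * g5) + (268) * (g2 * g3 * g9) + (56) * (g0 * g3 * g6 * g9)"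
    by (intro add_nonneg_nonneg mult_nonneg_nonneg divide_nonneg_nonneg zero_le_numeral zero_le_one n0 n1 n2 n3 n4 n5 n6 n9)
  show ?thesis using id nn by linarith
qed

lemma c_mss:
  assumes "okK Mi x1" "okK Sm x2" "okK Sm x3" "triC x1 x2 x3 t"
  shows "Poly Mi Sm Sm x1 x2 x3 t \<le> 0"
proof -
  have A: "0 \<le> x1" "x1 \<le> 1" "0 \<le> x2" "x2 \<le> 1" "0 \<le> x3" "x3 \<le> 1"
    "0 \<le> t" "t \<le> 1 - x1" "t \<le> 1 - x2" "t \<le> 1 - x3" "1 - x1 - x2 \<le> t" "1 - x1 - x3 \<le> t" "1 - x2 - x3 \<le> t"
    using assms unfolding okK_def triC_def by auto
  have B: "x2 \<le> 2/5" "x3 \<le> 2/5"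
    using assms unfolding okK_def by auto
  define g0 where "g0 = x1"
  have n0: "0 \<le> g0" unfolding g0_def using A B by linarith
  define g1 where "g1 = 1 - x1"
  have n1: "0 \<le> g1" unfolding g1_def using A B by linarith
  define g2 where "g2 = x2"
  have n2: "0 \<le> g2" unfolding g2_def using A B by linarith
  define g4 where "g4 = x3"
  have n4: "0 \<le> g4" unfolding g4_def using A B by linarith
  define g6 where "g6 = x2 + x3 - x1"
  have n6: "0 \<le> g6" unfolding g6_def using A B by linarith
  define g7 where "g7 = x1 + x3 - x2"
  have n7: "0 \<le> g7" unfolding g7_def using A B by linarith
  define g8 where "g8 = x1 + x2 - x3"
  have n8: "0 \<le> g8" unfolding g8_def using A B by linarith
  define g9 where "g9 = 2/5 - x2"
  have n9: "0 \<le> g9" unfolding g9_def using A B by linarith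
  define g10 where "g10 = 2/5 - x3"
  have n10: "0 \<le> g10" unfolding g10_def using A B by linarith
  have id: "-(Poly Mi Sm Sm x1 x2 x3 t) = (464/5) * (g0 * g6 * g6) + (11) * (g0 * g7 * g7 * g9) + (508/5) * (g0 * g0 * g6) + (2408/25) * (g9) + (761/5) * (g2 * g6) + (272/5) * (g0 * g7 * g9) + (112) * (g0 * g2 * g4 * g6) + (272/5) * (g0 * g4 * g6) + (624/5) * (g0 * g10) + (11) * (g0 * g6 * g6 * g6) + (11) * (g0 * g0 * g6 * g6) + (11) * (g0 * g8 * g8 * g10) + (156) * (g2 * g4 * g6) + (6776/25) * (g0 * g6) + (2032/25) * (g0 * g9) + (308/5) * (g0 * g0 * g9) + (308/5) * (g0 * g0 * g10) + (2184/125) * (g1) + (621/5) * (g8 * g10) + (159/5) * (g4 * g6) + (2604/25) * (g6) + (19/5) * (g7 * g9)"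
    unfolding Poly_def AK_def costK.simps QK.simps piK.simps NK.simps g0_def g1_def g2_def g4_def g6_def g7_def g8_def g9_def g10_def by algebra
  have nn: "0 \<le> (464/5) * (g0 * g6 * g6) + (11) * (g0 * g7 * g7 * g9) + (508/5) * (g0 * g0 * g6) + (2408/25) * (g9) + (761/5) * (g2 * g6) + (272/5) * (g0 * g7 * g9) + (112) * (g0 * g2 * g4 * g6) + (272/5) * (g0 * g4 * g6) + (624/5) * (g0 * g10) + (11) * (g0 * g6 * g6 * g6) + (11) * (g0 * g0 * g6 * g6) + (11) * (g0 * g8 * g8 * g10) + (156) * (g2 * g4 * g6) + (6776/25) * (g0 * g6) + (2032/25) * (g0 * g9) + (308/5) * (g0 * g0 * g9) + (308/5) * (g0 * g0 * g10) + (2184/125) * (g1) + (621/5) * (g8 * g10) + (159/5) * (g4 * g6) + (2604/25) * (g6) + (19/5) * (g7 * g9)"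
    by (intro add_nonneg_nonneg mult_nonneg_nonneg divide_nonneg_nonneg zero_le_numeral zero_le_one n0 n1 n2 n4 n6 n7 n8 n9 n10)
  show ?thesis using id nn by linarith
qed

lemma c_msl:
  assumes "okK Mi x1" "okK Sm x2" "okK La x3" "triC x1 x2 x3 t"
  shows "Poly Mi Sm La x1 x2 x3 t \<le> 0"
proof -
  have A: "0 \<le> x1" "x1 \<le> 1" "0 \<le> x2" "x2 \<le> 1" "0 \<le> x3" "x3 \<le> 1"
    "0 \<le> t" "t \<le> 1 - x1" "t \<le> 1 - x2" "t \<le> 1 - x3" "1 - x1 - x2 \<le> t" "1 - x1 - x3 \<le> t" "1 - x2 - x3 \<le> t"
    using assms unfolding okK_def triC_def by auto
  have B: "x2 \<le> 2/5" "2/5 \<le> x3"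
    using assms unfolding okK_def by auto
  define g1 where "g1 = 1 - x1"
  have n1: "0 \<le> g1" unfolding g1_def using A B by linarith
  define g3 where "g3 = 1 - x2"
  have n3: "0 \<le> g3" unfolding g3_def using A B by linarith
  define g5 where "g5 = 1 - x3"
  have n5: "0 \<le> g5" unfolding g5_def using A B by linarith
  define g6 where "g6 = x2 + x3 - x1"
  have n6: "0 \<le> g6" unfolding g6_def using A B by linarith
  define g7 where "g7 = x1 + x3 - x2"
  have n7: "0 \<le> g7" unfolding g7_def using A B by linarith
  define g8 where "g8 = x1 + x2 - x3"
  have n8: "0 \<le> g8" unfolding g8_def using A B by linarith
  define g9 where "g9 = 2/5 - x2"
  have n9: "0 \<le> g9" unfolding g9_def using A B by linarith
  define g10 where "g10 = x3 - 2/5"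
  have n10: "0 \<le> g10" unfolding g10_def using A B by linarith
  have id: "-(Poly Mi Sm La x1 x2 x3 t) = (1523094095294808469/36102668127544902) * (g1 * g1 * g1 * g1 * g1 * g1) + (771454184250305120/18051334063772451) * (g5 * g5 * g5 * g6 * g8 * g10) + (2620526231125050099/96273781673453072) * (g1 * g1 * g7 * g7 * g7 * g8) + (42284685022808126689/385095126693812288) * (g3 * g3 * g6 * g6 * g7 * g7) + (3024889410354814505/18051334063772451) * (g5 * g5 * g5 * g6 * g6 * g10) + (4313621771172785881/577642690040718432) * (g1 * g7 * g7 * g7 * g7 * g8) + (1363190707260132107243/8664640350610776480) * (g1 * g6 * g6 * g6 * g7 * g8) + (5497578495742596899/72205336255089804) * (g3 * g3 * g3 * g6 * g8) + (9959543066827111609/180513340637724510) * (g1 * g1 * g1 * g1 * g1 * g7) + (1172571791561877547/12034222709181634) * (g6) + (10171274970698806841/192547563346906144) * (g7 * g7 * g7 * g8 * g8 * g9) + (908846957119761487/1925475633469061440) * (g7 * g7 * g7 * g7 * g7 * g7) + (903413958677713456153/17329280701221552960) * (g6 * g6 * g6 * g6 * g6 * g8) + (17342401147256861123/385095126693812288) * (g1 * g1 * g6 * g6 * g7 * g7) + (161769457812733817/48136890836726536) * (g1 * g1 * g1 * g1 * g6 * g7) + (137244117149118563461/577642690040718432) * (g1 * g6 * g6 * g6 * g8 * g8) + (2038280888760770029/24068445418363268) * (g1 * g8) + (1373167193079551137/385095126693812288) * (g7 * g7 * g7 * g7 * g7 * g9) + (512723991363497051/14811351026685088) * (g6 * g6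 * g7 * g7 * g8 * g8) + (22840331475008224485/385095126693812288) * (g6 * g6 * g7 * g8 * g8 * g8) + (2798197631800060361/288821345020359216) * (g7 * g7 * g8 * g8 * g8 * g10) + (1593102198448128977/144410672510179608) * (g7 * g7 * g7 * g8 * g8 * g10) + (4901618557062737261/120342227091816340) * (g3 * g3 * g3 * g3 * g3 * g8) + (1697602157287999333/48136890836726536) * (g1 * g1 * g7 * g7 * g8 * g8) + (9793913260985489725/192547563346906144) * (g6 * g7 * g7 * g7 * g9) + (61283366345887515391/4621141520325747456) * (g6 * g6 * g6 * g6 * g7 * g7) + (3165451033105744131/385095126693812288) * (g1 * g8 * g8 * g8 * g8 * g8) + (296166982905733619597/11552853800814368640) * (g6 * g6 * g6 * g6 * g6 * g7) + (4958915937351745/36102668127544902) * (g7 * g8 * g8 * g8 * g8 * g9) + (38795316520714722743/1155285380081436864) * (g3 * g6 * g7 * g7 * g7 * g8) + (2666742897458050417/48136890836726536) * (g3 * g3 * g3 * g3 * g6 * g6) + (228517285105592657971/2888213450203592160) * (g1 * g3 * g6 * g6 * g6 * g6) + (3005243318127183863/48136890836726536) * (g1 * g1 * g6 * g8 * g8 * g8) + (7695650430690260021/36102668127544902) * (g1 * g1 * g1 * g6 * g6 * g8) + (1547712512860866881/144410672510179608) * (g5 * g5 * g5 * g5 * g7 * g8) + (27335702660378714135/1155285380081436864) * (g6 * g8 * g8 * g8 * g8 * g8) + (8348464287867109505/96273781673453072) * (g6 * g7 * g7 * g8 * g8 * g9) + (2768212905177072517/36102668127544902) * (g3 * g3 *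 g3 * g6 * g6 * g8) + (5661062917993061485/144410672510179608) * (g7 * g7 * g7 * g7 * g8 * g9) + (1295116670795658419387/11552853800814368640) * (g6 * g6 * g6 * g7 * g8 * g8) + (10758092227418369227/5776426900407184320) * (g6 * g7 * g7 * g7 * g7) + (504090964405281334069/3465856140244310592) * (g6 * g6 * g6 * g6 * g8 * g9) + (21233628073211777705/1540380506775249152) * (g6 * g7 * g7 * g7 * g7 * g8) + (9123619762803168643/24068445418363268) * (g5 * g5 * g6 * g6 * g6 * g7) + (14481757818327313/18051334063772451) * (g1 * g1 * g7 * g7 * g7 * g7) + (935671186747773557/18051334063772451) * (g1 * g1 * g1 * g1 * g6 * g6) + (376353527979179951/12034222709181634) * (g1 * g1 * g1 * g3 * g8 * g8) + (2252787458357452849/96273781673453072) * (g1 * g1 * g6 * g7 * g8 * g8) + (153992189131373951/6017111354590817) * (g1 * g1 * g1 * g5 * g7 * g7) + (21747717820639881883/2310570760162873728) * (g6 * g7 * g7 * g7 * g7 * g9) + (1320378352766496943/90256670318862255) * (g3 * g3 * g3 * g3 * g3 * g7) + (1373434233715481935/36102668127544902) * (g3 * g3 * g7 * g8 * g8 * g9) + (92115803838768057547/4332320175305388240) * (g1 * g6 * g6 * g6 * g6 * g8) + (5365347497647106681/36102668127544902) * (g7 * g9) + (7306371790971190547/48136890836726536) * (g6 * g8) + (339421283902756267/18051334063772451) * (g5 * g5 * g5 * g5 * g7 * g7) + (6957516168663479833/180513340637724510) * (g5 * g5 * g5 * g5 * g5 * g7) + (2536235494815925081043/17329280701221552960) *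 (g6 * g6 * g6 * g7 * g7 * g8) + (2805357770226221943/96273781673453072) * (g6 * g6 * g6 * g8 * g8 * g8) + (1850940399702113375/144410672510179608) * (g5 * g5 * g5 * g5 * g8 * g8) + (32433210855132029/12034222709181634) * (g3 * g3 * g6 * g7 * g7 * g8) + (5997665753225101147/577642690040718432) * (g1 * g1 * g7 * g8 * g8 * g8) + (10669488647708911697/144410672510179608) * (g5 * g6 * g6 * g8 * g8 * g8) + (75796317528233909871/385095126693812288) * (g5 * g6 * g6 * g6 * g6 * g7) + (3924349765155554645/72205336255089804) * (g8 * g8 * g9) + (30223036078427355331/144410672510179608) * (g6 * g7) + (5656745303879153519/192547563346906144) * (g7 * g7 * g8 * g8 * g8 * g9) + (80545711802845582255/1155285380081436864) * (g6 * g8 * g8 * g8 * g8 * g9) + (7902435527431524673/72205336255089804) * (g1 * g6 * g6 * g6 * g7 * g7) + (563406928675163329777/3465856140244310592) * (g6 * g6 * g6 * g7 * g8 * g9) + (14571168233509814689/2310570760162873728) * (g6 * g6 * g6 * g6 * g6 * g6) + (161330998999482902567/1155285380081436864) * (g3 * g6 * g6 * g6 * g7 * g7) + (1023138017189750363/577642690040718432) * (g8 * g8 * g8 * g8 * g8 * g8) + (8050352825128726739/2888213450203592160) * (g1 * g7 * g7 * g7 * g7 * g7) + (1057388418300813211/30085556772954085) * (g1 * g1 * g1 * g1 * g1 * g8) + (24179337297149002955/385095126693812288) * (g6 * g7 * g8 * g8 * g8 * g9) + (617518387250255233/18051334063772451) * (g1 * g7) + (498655319847706043/36102668127544902) * (g5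 * g5 * g5 * g5 * g5 * g5) + (30448384365931348599/96273781673453072) * (g3 * g3 * g6 * g6 * g7 * g8) + (13850034847149040517/2310570760162873728) * (g6 * g7 * g7 * g7 * g8 * g8) + (1614389312557619041/192547563346906144) * (g1 * g1 * g8 * g8 * g8 * g8) + (1129063037106844057/577642690040718432) * (g5 * g6 * g6 * g6 * g6 * g9) + (2649109452039864329/577642690040718432) * (g5 * g5 * g7 * g8 * g8 * g8) + (28758119236317886951/96273781673453072) * (g3 * g3 * g6 * g6 * g8 * g8)"
    unfolding Poly_def AK_def costK.simps QK.simps piK.simps NK.simps g1_def g3_def g5_def g6_def g7_def g8_def g9_def g10_def by algebra
  have nn: "0 \<le> (1523094095294808469/36102668127544902) * (g1 * g1 * g1 * g1 * g1 * g1) + (771454184250305120/18051334063772451) * (g5 * g5 * g5 * g6 * g8 * g10) + (2620526231125050099/96273781673453072) * (g1 * g1 * g7 * g7 * g7 * g8) + (42284685022808126689/385095126693812288) * (g3 * g3 * g6 * g6 * g7 * g7) + (3024889410354814505/18051334063772451) * (g5 * g5 * g5 * g6 * g6 * g10) + (4313621771172785881/577642690040718432) * (g1 * g7 * g7 * g7 * g7 * g8) + (1363190707260132107243/8664640350610776480) * (g1 * g6 * g6 * g6 * g7 * g8) + (5497578495742596899/72205336255089804) * (g3 * g3 * g3 * g6 * g8) + (9959543066827111609/180513340637724510) * (g1 * g1 * g1 * g1 * g1 * g7) + (1172571791561877547/12034222709181634) * (g6) + (10171274970698806841/192547563346906144) * (g7 * g7 * g7 * g8 * g8 * g9) + (908846957119761487/1925475633469061440)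 * (g7 * g7 * g7 * g7 * g7 * g7) + (903413958677713456153/17329280701221552960) * (g6 * g6 * g6 * g6 * g6 * g8) + (17342401147256861123/385095126693812288) * (g1 * g1 * g6 * g6 * g7 * g7) + (161769457812733817/48136890836726536) * (g1 * g1 * g1 * g1 * g6 * g7) + (137244117149118563461/577642690040718432) * (g1 * g6 * g6 * g6 * g8 * g8) + (2038280888760770029/24068445418363268) * (g1 * g8) + (1373167193079551137/385095126693812288) * (g7 * g7 * g7 * g7 * g7 * g9) + (512723991363497051/14811351026685088) * (g6 * g6 * g7 * g7 * g8 * g8) + (22840331475008224485/385095126693812288) * (g6 * g6 * g7 * g8 * g8 * g8) + (2798197631800060361/288821345020359216) * (g7 * g7 * g8 * g8 * g8 * g10) + (1593102198448128977/144410672510179608) * (g7 * g7 * g7 * g8 * g8 * g10) + (4901618557062737261/120342227091816340) * (g3 * g3 * g3 * g3 * g3 * g8) + (1697602157287999333/48136890836726536) * (g1 * g1 * g7 * g7 * g8 * g8) + (9793913260985489725/192547563346906144) * (g6 * g7 * g7 * g7 * g9) + (61283366345887515391/4621141520325747456) * (g6 * g6 * g6 * g6 * g7 * g7) + (3165451033105744131/385095126693812288) * (g1 * g8 * g8 * g8 * g8 * g8) + (296166982905733619597/11552853800814368640) * (g6 * g6 * g6 * g6 * g6 * g7) + (4958915937351745/36102668127544902) * (g7 * g8 * g8 * g8 * g8 * g9) + (38795316520714722743/1155285380081436864) * (g3 * g6 * g7 * g7 * g7 * g8) + (2666742897458050417/48136890836726536) * (g3 * g3 * g3 * g3 * g6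 * g6) + (228517285105592657971/2888213450203592160) * (g1 * g3 * g6 * g6 * g6 * g6) + (3005243318127183863/48136890836726536) * (g1 * g1 * g6 * g8 * g8 * g8) + (7695650430690260021/36102668127544902) * (g1 * g1 * g1 * g6 * g6 * g8) + (1547712512860866881/144410672510179608) * (g5 * g5 * g5 * g5 * g7 * g8) + (27335702660378714135/1155285380081436864) * (g6 * g8 * g8 * g8 * g8 * g8) + (8348464287867109505/96273781673453072) * (g6 * g7 * g7 * g8 * g8 * g9) + (2768212905177072517/36102668127544902) * (g3 * g3 * g3 * g6 * g6 * g8) + (5661062917993061485/144410672510179608) * (g7 * g7 * g7 * g7 * g8 * g9) + (1295116670795658419387/11552853800814368640) * (g6 * g6 * g6 * g7 * g8 * g8) + (10758092227418369227/5776426900407184320) * (g6 * g7 * g7 * g7 * g7) + (504090964405281334069/3465856140244310592) * (g6 * g6 * g6 * g6 * g8 * g9) + (21233628073211777705/1540380506775249152) * (g6 * g7 * g7 * g7 * g7 * g8) + (9123619762803168643/24068445418363268) * (g5 * g5 * g6 * g6 * g6 * g7) + (14481757818327313/18051334063772451) * (g1 * g1 * g7 * g7 * g7 * g7) + (935671186747773557/18051334063772451) * (g1 * g1 * g1 * g1 * g6 * g6) + (376353527979179951/12034222709181634) * (g1 * g1 * g1 * g3 * g8 * g8) + (2252787458357452849/96273781673453072) * (g1 * g1 * g6 * g7 * g8 * g8) + (153992189131373951/6017111354590817) * (g1 * g1 * g1 * g5 * g7 * g7) + (21747717820639881883/2310570760162873728) * (g6 * g7 * g7 * g7 * g7 *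 g9) + (1320378352766496943/90256670318862255) * (g3 * g3 * g3 * g3 * g3 * g7) + (1373434233715481935/36102668127544902) * (g3 * g3 * g7 * g8 * g8 * g9) + (92115803838768057547/4332320175305388240) * (g1 * g6 * g6 * g6 * g6 * g8) + (5365347497647106681/36102668127544902) * (g7 * g9) + (7306371790971190547/48136890836726536) * (g6 * g8) + (339421283902756267/18051334063772451) * (g5 * g5 * g5 * g5 * g7 * g7) + (6957516168663479833/180513340637724510) * (g5 * g5 * g5 * g5 * g5 * g7) + (2536235494815925081043/17329280701221552960) * (g6 * g6 * g6 * g7 * g7 * g8) + (2805357770226221943/96273781673453072) * (g6 * g6 * g6 * g8 * g8 * g8) + (1850940399702113375/144410672510179608) * (g5 * g5 * g5 * g5 * g8 * g8) + (32433210855132029/12034222709181634) * (g3 * g3 * g6 * g7 * g7 * g8) + (5997665753225101147/577642690040718432) * (g1 * g1 * g7 * g8 * g8 * g8) + (10669488647708911697/144410672510179608) * (g5 * g6 * g6 * g8 * g8 * g8) + (75796317528233909871/385095126693812288) * (g5 * g6 * g6 * g6 * g6 * g7) + (3924349765155554645/72205336255089804) * (g8 * g8 * g9) + (30223036078427355331/144410672510179608) * (g6 * g7) + (5656745303879153519/192547563346906144) * (g7 * g7 * g8 * g8 * g8 * g9) + (80545711802845582255/1155285380081436864) * (g6 * g8 * g8 * g8 * g8 * g9) + (7902435527431524673/72205336255089804) * (g1 * g6 * g6 * g6 * g7 * g7) + (563406928675163329777/3465856140244310592) * (g6 * g6 * g6 * g7 * g8 * g9) + (14571168233509814689/2310570760162873728)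 * (g6 * g6 * g6 * g6 * g6 * g6) + (161330998999482902567/1155285380081436864) * (g3 * g6 * g6 * g6 * g7 * g7) + (1023138017189750363/577642690040718432) * (g8 * g8 * g8 * g8 * g8 * g8) + (8050352825128726739/2888213450203592160) * (g1 * g7 * g7 * g7 * g7 * g7) + (1057388418300813211/30085556772954085) * (g1 * g1 * g1 * g1 * g1 * g8) + (24179337297149002955/385095126693812288) * (g6 * g7 * g8 * g8 * g8 * g9) + (617518387250255233/18051334063772451) * (g1 * g7) + (498655319847706043/36102668127544902) * (g5 * g5 * g5 * g5 * g5 * g5) + (30448384365931348599/96273781673453072) * (g3 * g3 * g6 * g6 * g7 * g8) + (13850034847149040517/2310570760162873728) * (g6 * g7 * g7 * g7 * g8 * g8) + (1614389312557619041/192547563346906144) * (g1 * g1 * g8 * g8 * g8 * g8) + (1129063037106844057/577642690040718432) * (g5 * g6 * g6 * g6 * g6 * g9) + (2649109452039864329/577642690040718432) * (g5 * g5 * g7 * g8 * g8 * g8) + (28758119236317886951/96273781673453072) * (g3 * g3 * g6 * g6 * g8 * g8)"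
    by (intro add_nonneg_nonneg mult_nonneg_nonneg divide_nonneg_nonneg zero_le_numeral zero_le_one n1 n3 n5 n6 n7 n8 n9 n10)
  show ?thesis using id nn by linarith
qed

lemma c_sss:
  assumes "okK Sm x1" "okK Sm x2" "okK Sm x3" "triC x1 x2 x3 t"
  shows "Poly Sm Sm Sm x1 x2 x3 t \<le> 0"
proof -
  have A: "0 \<le> x1" "x1 \<le> 1" "0 \<le> x2" "x2 \<le> 1" "0 \<le> x3" "x3 \<le> 1"
    "0 \<le> t" "t \<le> 1 - x1" "t \<le> 1 - x2" "t \<le> 1 - x3" "1 - x1 - x2 \<le> t" "1 - x1 - x3 \<le> t" "1 - x2 - x3 \<le> t"
    using assms unfolding okK_def triC_def by auto
  have B: "x1 \<le> 2/5" "x2 \<le> 2/5" "x3 \<le> 2/5"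
    using assms unfolding okK_def by auto
  define g0 where "g0 = x1"
  have n0: "0 \<le> g0" unfolding g0_def using A B by linarith
  define g2 where "g2 = x2"
  have n2: "0 \<le> g2" unfolding g2_def using A B by linarith
  define g4 where "g4 = x3"
  have n4: "0 \<le> g4" unfolding g4_def using A B by linarith
  define g6 where "g6 = x2 + x3 - x1"
  have n6: "0 \<le> g6" unfolding g6_def using A B by linarith
  define g7 where "g7 = x1 + x3 - x2"
  have n7: "0 \<le> g7" unfolding g7_def using A B by linarith
  define g8 where "g8 = x1 + x2 - x3"
  have n8: "0 \<le> g8" unfolding g8_def using A B by linarith
  define g11 where "g11 = 2/5 - x3"
  have n11: "0 \<le> g11" unfolding g11_def using A B by linarith
  have id: "-(Poly Sm Sm Sm x1 x2 x3 t) = (156) * (g0 * g0 * g2 * g4) + (156) * (g0 * g0 * g2) + (39) * (g2 * g4 * g7) + (156) * (g0 * g2 * g2 * g4) + (156) * (g0 * g2 * g2) + (156) * (g0 * g2 * g4 * g4) + (312) * (g0 * g2 * g4) + (78) * (g6 * g6) + (117) * (g0 * g4 * g4) + (156) * (g2 * g8) + (156) * (g0 * g7) + (117) * (g2 * g4 * g4) + (195) * (g4 * g4 * g4) + (195) * (g6 * g7 * g11) + (39) * (g0 * g4 * g6)"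
    unfolding Poly_def AK_def costK.simps QK.simps piK.simps NK.simps g0_def g2_def g4_def g6_def g7_def g8_def g11_def by algebra
  have nn: "0 \<le> (156) * (g0 * g0 * g2 * g4) + (156) * (g0 * g0 * g2) + (39) * (g2 * g4 * g7) + (156) * (g0 * g2 * g2 * g4) + (156) * (g0 * g2 * g2) + (156) * (g0 * g2 * g4 * g4) + (312) * (g0 * g2 * g4) + (78) * (g6 * g6) + (117) * (g0 * g4 * g4) + (156) * (g2 * g8) + (156) * (g0 * g7) + (117) * (g2 * g4 * g4) + (195) * (g4 * g4 * g4) + (195) * (g6 * g7 * g11) + (39) * (g0 * g4 * g6)"
    by (intro add_nonneg_nonneg mult_nonneg_nonneg divide_nonneg_nonneg zero_le_numeral zero_le_one n0 n2 n4 n6 n7 n8 n11)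
  show ?thesis using id nn by linarith
qed

lemma c_ssl:
  assumes "okK Sm x1" "okK Sm x2" "okK La x3" "triC x1 x2 x3 t"
  shows "Poly Sm Sm La x1 x2 x3 t \<le> 0"
proof -
  have A: "0 \<le> x1" "x1 \<le> 1" "0 \<le> x2" "x2 \<le> 1" "0 \<le> x3" "x3 \<le> 1"
    "0 \<le> t" "t \<le> 1 - x1" "t \<le> 1 - x2" "t \<le> 1 - x3" "1 - x1 - x2 \<le> t" "1 - x1 - x3 \<le> t" "1 - x2 - x3 \<le> t"
    using assms unfolding okK_def triC_def by auto
  have B: "x1 \<le> 2/5" "x2 \<le> 2/5" "2/5 \<le> x3"
    using assms unfolding okK_def by auto
  define g0 where "g0 = x1"
  have n0: "0 \<le> g0" unfolding g0_def using A B by linarith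
  define g2 where "g2 = x2"
  have n2: "0 \<le> g2" unfolding g2_def using A B by linarith
  define g4 where "g4 = x3"
  have n4: "0 \<le> g4" unfolding g4_def using A B by linarith
  define g6 where "g6 = x2 + x3 - x1"
  have n6: "0 \<le> g6" unfolding g6_def using A B by linarith
  define g7 where "g7 = x1 + x3 - x2"
  have n7: "0 \<le> g7" unfolding g7_def using A B by linarith
  define g8 where "g8 = x1 + x2 - x3"
  have n8: "0 \<le> g8" unfolding g8_def using A B by linarith
  define g11 where "g11 = x3 - 2/5"
  have n11: "0 \<le> g11" unfolding g11_def using A B by linarith
  have id: "-(Poly Sm Sm La x1 x2 x3 t) = (156) * (g0 * g0 * g2 * g4) + (7) * (g0 * g0 * g2) + (417/2) * (g0 * g0 * g4) + (110) * (g0 * g0) + (156) * (g0 * g2 * g2 * g4) + (7) * (g0 * g2 * g2) + (112) * (g0 * g2 * g4 * g4) + (149) * (g0 * g2 * g8) + (90) * (g2 * g8) + (119/2) * (g0 * g4 * g4) + (417/2) * (g2 * g2 * g4) + (22) * (g2 * g2) + (119/2) * (g2 * g4 * g4) + (2) * (g0 * g7) + (105/2) * (g6 * g7 * g11) + (105/2) * (g4 * g4 * g8) + (110) * (g4 * g11) + (23) * (g6 * g6)"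
    unfolding Poly_def AK_def costK.simps QK.simps piK.simps NK.simps g0_def g2_def g4_def g6_def g7_def g8_def g11_def by algebra
  have nn: "0 \<le> (156) * (g0 * g0 * g2 * g4) + (7) * (g0 * g0 * g2) + (417/2) * (g0 * g0 * g4) + (110) * (g0 * g0) + (156) * (g0 * g2 * g2 * g4) + (7) * (g0 * g2 * g2) + (112) * (g0 * g2 * g4 * g4) + (149) * (g0 * g2 * g8) + (90) * (g2 * g8) + (119/2) * (g0 * g4 * g4) + (417/2) * (g2 * g2 * g4) + (22) * (g2 * g2) + (119/2) * (g2 * g4 * g4) + (2) * (g0 * g7) + (105/2) * (g6 * g7 * g11) + (105/2) * (g4 * g4 * g8) + (110) * (g4 * g11) + (23) * (g6 * g6)"
    by (intro add_nonneg_nonneg mult_nonneg_nonneg divide_nonneg_nonneg zero_le_numeral zero_le_one n0 n2 n4 n6 n7 n8 n11)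
  show ?thesis using id nn by linarith
qed

lemma c_sll:
  assumes "okK Sm x1" "okK La x2" "okK La x3" "triC x1 x2 x3 t"
  shows "Poly Sm La La x1 x2 x3 t \<le> 0"
proof -
  have A: "0 \<le> x1" "x1 \<le> 1" "0 \<le> x2" "x2 \<le> 1" "0 \<le> x3" "x3 \<le> 1"
    "0 \<le> t" "t \<le> 1 - x1" "t \<le> 1 - x2" "t \<le> 1 - x3" "1 - x1 - x2 \<le> t" "1 - x1 - x3 \<le> t" "1 - x2 - x3 \<le> t"
    using assms unfolding okK_def triC_def by auto
  have B: "x1 \<le> 2/5" "2/5 \<le> x2" "2/5 \<le> x3"
    using assms unfolding okK_def by auto
  define g0 where "g0 = t"
  have n0: "0 \<le> g0" unfolding g0_def using A B by linarith
  define g1 where "g1 = 1 - x1 - t"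
  have n1: "0 \<le> g1" unfolding g1_def using A B by linarith
  define g2 where "g2 = 1 - x2 - t"
  have n2: "0 \<le> g2" unfolding g2_def using A B by linarith
  define g3 where "g3 = 1 - x3 - t"
  have n3: "0 \<le> g3" unfolding g3_def using A B by linarith
  define g4 where "g4 = x1 + x2 - 1 + t"
  have n4: "0 \<le> g4" unfolding g4_def using A B by linarith
  define g5 where "g5 = x1 + x3 - 1 + t"
  have n5: "0 \<le> g5" unfolding g5_def using A B by linarith
  define g6 where "g6 = x2 + x3 - 1 + t"
  have n6: "0 \<le> g6" unfolding g6_def using A B by linarith
  define g7 where "g7 = 2/5 - x1"
  have n7: "0 \<le> g7" unfolding g7_def using A B by linarith
  define g8 where "g8 = x2 - 2/5"
  have n8: "0 \<le> g8" unfolding g8_def using A B by linarith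
  define g9 where "g9 = x3 - 2/5"
  have n9: "0 \<le> g9" unfolding g9_def using A B by linarith
  have id: "-(Poly Sm La La x1 x2 x3 t) = (3197/275) * (g0 * g4 * g4 * g8) + (312/11) * (g2 * g2 * g7 * g7 * g8) + (156/11) * (g4 * g7 * g8 * g8 * g9) + (204156/1375) * (g2 * g7 * g7) + (53511/6875) * (g1 * g4) + (593127/5500) * (g0 * g7 * g9) + (15963/275) * (g1 * g2 * g6 * g6) + (57539/11000) * (g0 * g0 * g8) + (117/11) * (g0 * g6 * g6 * g7 * g7) + (44347/2500) * (g2 * g4) + (156/11) * (g4 * g7 * g8 * g9 * g9) + (202121/1500) * (g8 * g8 * g9) + (143/375) * (g2 * g6 * g8) + (54030127/82500) * (g8 * g9) + (587647/33000) * (g3 * g9 * g9) + (37483/1100) * (g5 * g6 * g7 * g9) + (9668/275) * (g0 * g0 * g3 * g9) + (6471/275) * (g1 * g5 * g9 * g9) + (35341/1100) * (g2 * g2 * g5) + (5831/220) * (g4 * g6 * g7 * g9) + (234/11) * (g0 * g0 * g7 * g8 * g9) + (6711502/34375) * (g4) + (156/11) * (g5 * g7 * g8 * g8 * g9) + (3943/125) * (g0 * g4 * g7) + (29463/1100) * (g5 * g6 * g7 * g8) + (78/11) * (g0 * g2 * g2 * g7 * g8) + (6471/275) * (g0 * g2 * g4 * g7) + (7185593/27500) * (g4 * g8) + (173731/16500) * (g2 * g6 * g6) + (36999/275) * (g3 * g7 * g7) + (127109/6600) * (g0 * g0 * g9) + (624/55) * (g0 * g6 * g8 * g9) + (27637/3000)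 * (g2 * g2 * g2) + (1433624/6875) * (g7 * g7) + (3197/275) * (g1 * g1 * g2 * g6) + (2353/1100) * (g0 * g1 * g6 * g7) + (6394/275) * (g1 * g3 * g6 * g6) + (2920457/27500) * (g5 * g9) + (234/11) * (g5 * g6 * g7 * g8 * g9) + (2134553/82500) * (g9 * g9) + (24891/1100) * (g4 * g6 * g7 * g8) + (74927/500) * (g0 * g7 * g8) + (3197/275) * (g2 * g7 * g7 * g9) + (4748461/41250) * (g3 * g3) + (19201/220) * (g2 * g5) + (30469/550) * (g3 * g7 * g7 * g9) + (234/11) * (g4 * g6 * g7 * g8 * g9) + (1757219/16500) * (g3 * g8) + (46371/1100) * (g0 * g6 * g7 * g7) + (312/11) * (g3 * g3 * g7 * g7 * g9) + (331091/2750) * (g8 * g9 * g9) + (11449/6600) * (g3 * g6 * g6) + (6471/275) * (g1 * g5 * g8 * g9) + (6387/11000) * (g4 * g8 * g8) + (57539/11000) * (g5 * g8 * g8) + (3197/275) * (g0 * g5 * g5 * g9) + (17681371/82500) * (g2 * g9) + (39600637/825000) * (g2) + (117/11) * (g1 * g4 * g6 * g6 * g6) + (117/11) * (g1 * g2 * g6 * g6 * g6) + (195/11) * (g5 * g6 * g6 * g6 * g6) + (195/11) * (g3 * g6 * g6 * g6 * g6) + (78/11) * (g0 * g0 * g6 * g6 * g7) + (78/11) * (g0 * g3 * g3 * g7 * g9) + (3148/275) * (g3 * g6 * g6 * g7) + (26759/1100) * (g4 * g6 * g6 * g6) + (34559/1100) * (g2 * g6 * g6 * g6) + (3197/275) *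 (g3 * g7 * g7 * g8) + (26226361/137500) * (g9) + (156/11) * (g5 * g7 * g8 * g9 * g9) + (3208/55) * (g1 * g4 * g6 * g6) + (24683647/825000) * (g3) + (58484/1375) * (g4 * g9 * g9) + (78/11) * (g3 * g6 * g6 * g6) + (195/11) * (g5 * g6 * g6 * g7 * g9) + (195/11) * (g4 * g6 * g6 * g7 * g8) + (43159/550) * (g2 * g7 * g7 * g8)"
    unfolding Poly_def AK_def costK.simps QK.simps piK.simps NK.simps g0_def g1_def g2_def g3_def g4_def g5_def g6_def g7_def g8_def g9_def by algebra
  have nn: "0 \<le> (3197/275) * (g0 * g4 * g4 * g8) + (312/11) * (g2 * g2 * g7 * g7 * g8) + (156/11) * (g4 * g7 * g8 * g8 * g9) + (204156/1375) * (g2 * g7 * g7) + (53511/6875) * (g1 * g4) + (593127/5500) * (g0 * g7 * g9) + (15963/275) * (g1 * g2 * g6 * g6) + (57539/11000) * (g0 * g0 * g8) + (117/11) * (g0 * g6 * g6 * g7 * g7) + (44347/2500) * (g2 * g4) + (156/11) * (g4 * g7 * g8 * g9 * g9) + (202121/1500) * (g8 * g8 * g9) + (143/375) * (g2 * g6 * g8) + (54030127/82500) * (g8 * g9) + (587647/33000) * (g3 * g9 * g9) + (37483/1100) * (g5 * g6 * g7 * g9) + (9668/275) * (g0 * g0 * g3 * g9) + (6471/275) * (g1 * g5 * g9 * g9) + (35341/1100) * (g2 * g2 * g5) + (5831/220) * (g4 * g6 * g7 * g9) + (234/11) * (g0 * g0 * g7 * g8 * g9) + (6711502/34375) * (g4)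 + (156/11) * (g5 * g7 * g8 * g8 * g9) + (3943/125) * (g0 * g4 * g7) + (29463/1100) * (g5 * g6 * g7 * g8) + (78/11) * (g0 * g2 * g2 * g7 * g8) + (6471/275) * (g0 * g2 * g4 * g7) + (7185593/27500) * (g4 * g8) + (173731/16500) * (g2 * g6 * g6) + (36999/275) * (g3 * g7 * g7) + (127109/6600) * (g0 * g0 * g9) + (624/55) * (g0 * g6 * g8 * g9) + (27637/3000) * (g2 * g2 * g2) + (1433624/6875) * (g7 * g7) + (3197/275) * (g1 * g1 * g2 * g6) + (2353/1100) * (g0 * g1 * g6 * g7) + (6394/275) * (g1 * g3 * g6 * g6) + (2920457/27500) * (g5 * g9) + (234/11) * (g5 * g6 * g7 * g8 * g9) + (2134553/82500) * (g9 * g9) + (24891/1100) * (g4 * g6 * g7 * g8) + (74927/500) * (g0 * g7 * g8) + (3197/275) * (g2 * g7 * g7 * g9) + (4748461/41250) * (g3 * g3) + (19201/220) * (g2 * g5) + (30469/550) * (g3 * g7 * g7 * g9) + (234/11) * (g4 * g6 * g7 * g8 * g9) + (1757219/16500) * (g3 * g8) + (46371/1100) * (g0 * g6 * g7 * g7) + (312/11) * (g3 * g3 * g7 * g7 * g9) + (331091/2750) * (g8 * g9 * g9) + (11449/6600) * (g3 * g6 * g6) + (6471/275) * (g1 * g5 * g8 * g9) + (6387/11000) * (g4 * g8 * g8) + (57539/11000) * (g5 * g8 * g8) + (3197/275) * (g0 * g5 * g5 * g9) + (17681371/82500) * (g2 * g9) + (39600637/825000) * (g2) + (117/11) * (g1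 * g4 * g6 * g6 * g6) + (117/11) * (g1 * g2 * g6 * g6 * g6) + (195/11) * (g5 * g6 * g6 * g6 * g6) + (195/11) * (g3 * g6 * g6 * g6 * g6) + (78/11) * (g0 * g0 * g6 * g6 * g7) + (78/11) * (g0 * g3 * g3 * g7 * g9) + (3148/275) * (g3 * g6 * g6 * g7) + (26759/1100) * (g4 * g6 * g6 * g6) + (34559/1100) * (g2 * g6 * g6 * g6) + (3197/275) * (g3 * g7 * g7 * g8) + (26226361/137500) * (g9) + (156/11) * (g5 * g7 * g8 * g9 * g9) + (3208/55) * (g1 * g4 * g6 * g6) + (24683647/825000) * (g3) + (58484/1375) * (g4 * g9 * g9) + (78/11) * (g3 * g6 * g6 * g6) + (195/11) * (g5 * g6 * g6 * g7 * g9) + (195/11) * (g4 * g6 * g6 * g7 * g8) + (43159/550) * (g2 * g7 * g7 * g8)"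
    by (intro add_nonneg_nonneg mult_nonneg_nonneg divide_nonneg_nonneg zero_le_numeral zero_le_one n0 n1 n2 n3 n4 n5 n6 n7 n8 n9)
  show ?thesis using id nn by linarith
qed

lemma c_lll:
  assumes "okK La x1" "okK La x2" "okK La x3" "triC x1 x2 x3 t"
  shows "Poly La La La x1 x2 x3 t \<le> 0"
proof -
  have A: "0 \<le> x1" "x1 \<le> 1" "0 \<le> x2" "x2 \<le> 1" "0 \<le> x3" "x3 \<le> 1"
    "0 \<le> t" "t \<le> 1 - x1" "t \<le> 1 - x2" "t \<le> 1 - x3" "1 - x1 - x2 \<le> t" "1 - x1 - x3 \<le> t" "1 - x2 - x3 \<le> t"
    using assms unfolding okK_def triC_def by auto
  have B: "2/5 \<le> x1" "2/5 \<le> x2" "2/5 \<le> x3"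
    using assms unfolding okK_def by auto
  define g0 where "g0 = t"
  have n0: "0 \<le> g0" unfolding g0_def using A B by linarith
  define g1 where "g1 = 1 - x1 - t"
  have n1: "0 \<le> g1" unfolding g1_def using A B by linarith
  define g2 where "g2 = 1 - x2 - t"
  have n2: "0 \<le> g2" unfolding g2_def using A B by linarith
  define g3 where "g3 = 1 - x3 - t"
  have n3: "0 \<le> g3" unfolding g3_def using A B by linarith
  define g4 where "g4 = x1 + x2 - 1 + t"
  have n4: "0 \<le> g4" unfolding g4_def using A B by linarith
  define g5 where "g5 = x1 + x3 - 1 + t"
  have n5: "0 \<le> g5" unfolding g5_def using A B by linarith
  define g6 where "g6 = x2 + x3 - 1 + t"
  have n6: "0 \<le> g6" unfolding g6_def using A B by linarith
  define g7 where "g7 = x1 - 2/5"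
  have n7: "0 \<le> g7" unfolding g7_def using A B by linarith
  define g8 where "g8 = x2 - 2/5"
  have n8: "0 \<le> g8" unfolding g8_def using A B by linarith
  define g9 where "g9 = x3 - 2/5"
  have n9: "0 \<le> g9" unfolding g9_def using A B by linarith
  have id: "-(Poly La La La x1 x2 x3 t) = (97076/705) * (g2 * g5 * g5 * g8) + (1872/235) * (g3 * g3 * g4 * g5 * g6) + (6305894/88125) * (g0 * g6 * g6 * g7) + (2916152371/107512500) * (g1 * g5 * g5) + (1875768109/17918750) * (g1 * g4) + (1872/235) * (g3 * g4 * g4 * g4 * g5) + (1502934887/10751250) * (g3 * g8 * g8) + (936/235) * (g1 * g3 * g9 * g9 * g9) + (105550998431/537562500) * (g3 * g8) + (7488/235) * (g2 * g2 * g5 * g5 * g8) + (7392479/264375) * (g0 * g4 * g6 * g6) + (416/235) * (g0 * g0 * g0 * g4 * g5) + (16848/235) * (g0 * g6 * g7 * g8 * g9) + (13933800961/107512500) * (g0 * g4 * g5) + (6783025013/107512500) * (g0 * g6 * g6) + (273572275013/1612687500) * (g1 * g9) + (5181427/105750) * (g0 * g0 * g3 * g3) + (28223027251/179187500) * (g2 * g5) + (1872/235) * (g1 * g4 * g6 * g6 * g6) + (717480316/26878125) * (g3 * g6 * g6) + (120016/29375) * (g0 * g6 * g8 * g9) + (130774/3525) * (g3 * g4 * g4 * g5) + (57899237/528750) * (g0 * g4 * g5 * g8) + (36071579/14687500) * (g3) + (1872/235) * (g0 * g5 * g5 * g6 * g8) + (936/235) * (g1 * g2 * g7 * g7 * g7)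 + (113926/3525) * (g2 * g4 * g5 * g5) + (1144/235) * (g2 * g3 * g3 * g3 * g8) + (61985416/5375625) * (g3 * g4 * g6) + (4713427/105750) * (g0 * g5 * g5 * g8) + (7488/235) * (g1 * g1 * g6 * g6 * g7) + (622532072/3225375) * (g3 * g7) + (1456/235) * (g1 * g3 * g3 * g3 * g7) + (15912/235) * (g0 * g4 * g5 * g8 * g9) + (6165028049/26878125) * (g2 * g5 * g5) + (2340/47) * (g0 * g4 * g7 * g8 * g9) + (1977777/58750) * (g0 * g4 * g4 * g7) + (936/235) * (g2 * g3 * g8 * g8 * g8) + (3023504191/17918750) * (g3 * g4 * g4) + (869986777/4300500) * (g1 * g6 * g6) + (1144/235) * (g1 * g1 * g1 * g3 * g9) + (221255858/1791875) * (g3 * g6) + (123286/3525) * (g2 * g5 * g5 * g6) + (2340/47) * (g0 * g5 * g7 * g8 * g9) + (97076/705) * (g3 * g4 * g4 * g9) + (4987463689/26878125) * (g2 * g9 * g9) + (106438/3525) * (g1 * g5 * g6 * g6) + (1872/235) * (g2 * g2 * g4 * g5 * g6) + (1872/235) * (g0 * g4 * g4 * g5 * g9) + (2808/235) * (g3 * g4 * g4 * g4 * g6) + (10966/3525) * (g3 * g3 * g4 * g9) + (2271470629/107512500) * (g1 * g4 * g4) + (18454/3525) * (g1 * g1 * g6 * g7) + (1872/235) * (g0 * g4 * g5 * g5 * g8) + (3132569/176250) * (g0 * g4 * g5 * g5) + (5824/235) * (g2 * g5 * g5 * g5 * g8) + (1872/235) * (g0 * g4 * g6 * g6 * g7) +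 (936/235) * (g1 * g1 * g2 * g3 * g6) + (478828/3525) * (g1 * g6 * g6 * g7) + (9755233/88125) * (g0 * g4 * g6 * g7) + (1872/235) * (g0 * g5 * g6 * g6 * g7) + (2240915903/10751250) * (g3 * g7 * g7) + (2731974953/107512500) * (g0 * g0 * g3) + (6136/235) * (g1 * g6 * g6 * g6 * g7) + (5824/235) * (g3 * g4 * g4 * g4 * g9) + (2808/235) * (g2 * g4 * g5 * g5 * g5) + (123286/3525) * (g1 * g4 * g6 * g6) + (1613096773/53756250) * (g1 * g4 * g6) + (15383873/528750) * (g0 * g5 * g6 * g6) + (10576313/58750) * (g0 * g5 * g6 * g7) + (2379518/17625) * (g2 * g4 * g5) + (41184/29375) * (g0 * g0 * g0 * g9) + (5148/235) * (g0 * g7 * g7 * g8 * g9) + (13217577/58750) * (g0 * g4 * g4 * g9) + (1456/235) * (g1 * g2 * g2 * g2 * g7) + (1872/235) * (g2 * g5 * g5 * g5 * g6) + (1872/235) * (g1 * g1 * g4 * g5 * g6) + (1144/235) * (g1 * g1 * g1 * g2 * g8) + (1872/235) * (g0 * g4 * g4 * g6 * g6) + (728/235) * (g0 * g0 * g0 * g4 * g6) + (1538166/29375) * (g0 * g4 * g5 * g6) + (266159969/53756250) * (g0 * g0 * g2) + (106438/3525) * (g3 * g4 * g4 * g6) + (2808/235) * (g1 * g5 * g6 * g6 * g6) + (7488/235) * (g3 * g3 * g4 * g4 * g9) + (1872/235) * (g3 * g3 * g3 * g9) + (1872/235) * (g0 * g5 * g5 * g6 * g6) + (1872/235) * (g2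 * g2 * g2 * g8) + (1872/235) * (g0 * g4 * g4 * g6 * g9) + (14976/235) * (g0 * g4 * g6 * g7 * g9) + (8249539/528750) * (g0 * g0 * g2 * g2) + (9834569/176250) * (g0 * g5 * g8 * g9) + (14976/235) * (g0 * g5 * g6 * g7 * g8) + (1287947/28125) * (g0 * g4 * g6) + (1872/235) * (g0 * g4 * g4 * g5 * g5) + (24643030819/1612687500) * (g1 * g8) + (522329434/26878125) * (g3 * g5 * g5) + (5450562853/26878125) * (g1 * g9 * g9) + (12829582/146875) * (g0 * g5 * g7) + (1144/235) * (g2 * g2 * g2 * g3 * g9) + (10690627/528750) * (g0 * g5 * g9 * g9) + (4817027/35250) * (g0 * g5 * g6 * g8) + (162598/3525) * (g2 * g4 * g4) + (10966/3525) * (g2 * g2 * g5 * g8) + (205595423531/1612687500) * (g2 * g7) + (191263/17625) * (g0 * g6 * g7 * g7) + (56894983/264375) * (g0 * g4 * g9 * g9) + (25901860389/179187500) * (g1 * g6) + (24654408469/107512500) * (g0 * g4 * g4) + (5644771/264375) * (g0 * g4 * g4 * g8) + (1872/235) * (g1 * g1 * g1 * g7) + (126405229331/322537500) * (g0 * g5 * g6) + (728/235) * (g0 * g0 * g0 * g5 * g6)"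
    unfolding Poly_def AK_def costK.simps QK.simps piK.simps NK.simps g0_def g1_def g2_def g3_def g4_def g5_def g6_def g7_def g8_def g9_def by algebra
  have nn: "0 \<le> (97076/705) * (g2 * g5 * g5 * g8) + (1872/235) * (g3 * g3 * g4 * g5 * g6) + (6305894/88125) * (g0 * g6 * g6 * g7) + (2916152371/107512500) * (g1 * g5 * g5) + (1875768109/17918750) * (g1 * g4) + (1872/235) * (g3 * g4 * g4 * g4 * g5) + (1502934887/10751250) * (g3 * g8 * g8) + (936/235) * (g1 * g3 * g9 * g9 * g9) + (105550998431/537562500) * (g3 * g8) + (7488/235) * (g2 * g2 * g5 * g5 * g8) + (7392479/264375) * (g0 * g4 * g6 * g6) + (416/235) * (g0 * g0 * g0 * g4 * g5) + (16848/235) * (g0 * g6 * g7 * g8 * g9) + (13933800961/107512500) * (g0 * g4 * g5) + (6783025013/107512500) * (g0 * g6 * g6) + (273572275013/1612687500) * (g1 * g9) + (5181427/105750) * (g0 * g0 * g3 * g3) + (28223027251/179187500) * (g2 * g5) + (1872/235) * (g1 * g4 * g6 * g6 * g6) + (717480316/26878125) * (g3 * g6 * g6) + (120016/29375) * (g0 * g6 * g8 * g9) + (130774/3525) * (g3 * g4 * g4 * g5) + (57899237/528750) * (g0 * g4 * g5 * g8) + (36071579/14687500) * (g3) + (1872/235) * (g0 * g5 * g5 * g6 * g8) + (936/235) * (g1 * g2 * g7 * g7 * g7) + (113926/3525) * (g2 * g4 * g5 * g5) + (1144/235) * (g2 * g3 * g3 * g3 * g8) + (61985416/5375625) * (g3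 * g4 * g6) + (4713427/105750) * (g0 * g5 * g5 * g8) + (7488/235) * (g1 * g1 * g6 * g6 * g7) + (622532072/3225375) * (g3 * g7) + (1456/235) * (g1 * g3 * g3 * g3 * g7) + (15912/235) * (g0 * g4 * g5 * g8 * g9) + (6165028049/26878125) * (g2 * g5 * g5) + (2340/47) * (g0 * g4 * g7 * g8 * g9) + (1977777/58750) * (g0 * g4 * g4 * g7) + (936/235) * (g2 * g3 * g8 * g8 * g8) + (3023504191/17918750) * (g3 * g4 * g4) + (869986777/4300500) * (g1 * g6 * g6) + (1144/235) * (g1 * g1 * g1 * g3 * g9) + (221255858/1791875) * (g3 * g6) + (123286/3525) * (g2 * g5 * g5 * g6) + (2340/47) * (g0 * g5 * g7 * g8 * g9) + (97076/705) * (g3 * g4 * g4 * g9) + (4987463689/26878125) * (g2 * g9 * g9) + (106438/3525) * (g1 * g5 * g6 * g6) + (1872/235) * (g2 * g2 * g4 * g5 * g6) + (1872/235) * (g0 * g4 * g4 * g5 * g9) + (2808/235) * (g3 * g4 * g4 * g4 * g6) + (10966/3525) * (g3 * g3 * g4 * g9) + (2271470629/107512500) * (g1 * g4 * g4) + (18454/3525) * (g1 * g1 * g6 * g7) + (1872/235) * (g0 * g4 * g5 * g5 * g8) + (3132569/176250) * (g0 * g4 * g5 * g5) + (5824/235) * (g2 * g5 * g5 * g5 * g8) + (1872/235) * (g0 * g4 * g6 * g6 * g7) + (936/235) * (g1 * g1 * g2 * g3 * g6) + (478828/3525) * (g1 * g6 * g6 * g7) + (9755233/88125) * (g0 * g4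 * g6 * g7) + (1872/235) * (g0 * g5 * g6 * g6 * g7) + (2240915903/10751250) * (g3 * g7 * g7) + (2731974953/107512500) * (g0 * g0 * g3) + (6136/235) * (g1 * g6 * g6 * g6 * g7) + (5824/235) * (g3 * g4 * g4 * g4 * g9) + (2808/235) * (g2 * g4 * g5 * g5 * g5) + (123286/3525) * (g1 * g4 * g6 * g6) + (1613096773/53756250) * (g1 * g4 * g6) + (15383873/528750) * (g0 * g5 * g6 * g6) + (10576313/58750) * (g0 * g5 * g6 * g7) + (2379518/17625) * (g2 * g4 * g5) + (41184/29375) * (g0 * g0 * g0 * g9) + (5148/235) * (g0 * g7 * g7 * g8 * g9) + (13217577/58750) * (g0 * g4 * g4 * g9) + (1456/235) * (g1 * g2 * g2 * g2 * g7) + (1872/235) * (g2 * g5 * g5 * g5 * g6) + (1872/235) * (g1 * g1 * g4 * g5 * g6) + (1144/235) * (g1 * g1 * g1 * g2 * g8) + (1872/235) * (g0 * g4 * g4 * g6 * g6) + (728/235) * (g0 * g0 * g0 * g4 * g6) + (1538166/29375) * (g0 * g4 * g5 * g6) + (266159969/53756250) * (g0 * g0 * g2) + (106438/3525) * (g3 * g4 * g4 * g6) + (2808/235) * (g1 * g5 * g6 * g6 * g6) + (7488/235) * (g3 * g3 * g4 * g4 * g9) + (1872/235) * (g3 * g3 * g3 * g9) + (1872/235) * (g0 * g5 * g5 * g6 * g6) + (1872/235) * (g2 * g2 * g2 * g8) + (1872/235) * (g0 * g4 * g4 * g6 * g9) + (14976/235) * (g0 * g4 * g6 * g7 * g9)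 + (8249539/528750) * (g0 * g0 * g2 * g2) + (9834569/176250) * (g0 * g5 * g8 * g9) + (14976/235) * (g0 * g5 * g6 * g7 * g8) + (1287947/28125) * (g0 * g4 * g6) + (1872/235) * (g0 * g4 * g4 * g5 * g5) + (24643030819/1612687500) * (g1 * g8) + (522329434/26878125) * (g3 * g5 * g5) + (5450562853/26878125) * (g1 * g9 * g9) + (12829582/146875) * (g0 * g5 * g7) + (1144/235) * (g2 * g2 * g2 * g3 * g9) + (10690627/528750) * (g0 * g5 * g9 * g9) + (4817027/35250) * (g0 * g5 * g6 * g8) + (162598/3525) * (g2 * g4 * g4) + (10966/3525) * (g2 * g2 * g5 * g8) + (205595423531/1612687500) * (g2 * g7) + (191263/17625) * (g0 * g6 * g7 * g7) + (56894983/264375) * (g0 * g4 * g9 * g9) + (25901860389/179187500) * (g1 * g6) + (24654408469/107512500) * (g0 * g4 * g4) + (5644771/264375) * (g0 * g4 * g4 * g8) + (1872/235) * (g1 * g1 * g1 * g7) + (126405229331/322537500) * (g0 * g5 * g6) + (728/235) * (g0 * g0 * g0 * g5 * g6)"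
    by (intro add_nonneg_nonneg mult_nonneg_nonneg divide_nonneg_nonneg zero_le_numeral zero_le_one n0 n1 n2 n3 n4 n5 n6 n7 n8 n9)
  show ?thesis using id nn by linarith
qed


lemma c_mll:
  assumes "okK Mi x1" "okK La x2" "okK La x3" "triC x1 x2 x3 t"
  shows "Poly Mi La La x1 x2 x3 t \<le> 0"
proof -
  have A: "0 \<le> x1" "x1 \<le> 1" "0 \<le> x2" "x2 \<le> 1" "0 \<le> x3" "x3 \<le> 1"
    "0 \<le> t" "t \<le> 1 - x1" "t \<le> 1 - x2" "t \<le> 1 - x3" "1 - x1 - x2 \<le> t" "1 - x1 - x3 \<le> t" "1 - x2 - x3 \<le> t"
    using assms unfolding okK_def triC_def by auto
  have B: "2/5 \<le> x2" "2/5 \<le> x3"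
    using assms unfolding okK_def by auto
  define g0 where "g0 = x1"
  have n0: "0 \<le> g0" unfolding g0_def using A B by linarith
  define g1 where "g1 = 1 - x1"
  have n1: "0 \<le> g1" unfolding g1_def using A B by linarith
  define g3 where "g3 = 1 - x2"
  have n3: "0 \<le> g3" unfolding g3_def using A B by linarith
  define g5 where "g5 = 1 - x3"
  have n5: "0 \<le> g5" unfolding g5_def using A B by linarith
  define g6 where "g6 = x2 + x3 - x1"
  have n6: "0 \<le> g6" unfolding g6_def using A B by linarith
  define g7 where "g7 = x1 + x3 - x2"
  have n7: "0 \<le> g7" unfolding g7_def using A B by linarith
  define g8 where "g8 = x1 + x2 - x3"
  have n8: "0 \<le> g8" unfolding g8_def using A B by linarith
  define g9 where "g9 = x2 - 2/5"
  have n9: "0 \<le> g9" unfolding g9_def using A B by linarith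
  define g10 where "g10 = x3 - 2/5"
  have n10: "0 \<le> g10" unfolding g10_def using A B by linarith
  define gt where "gt = 1 - x1 - t"
  have nt: "0 \<le> gt" unfolding gt_def using A by linarith
  define gB where "gB = 22*((1+x1)*(1+x2)*(1+x3)) + 78*((1+2*x1)*(1-x1)*(1+x2)*(1+x3))"
  have nB: "0 \<le> gB" unfolding gB_def using A by (intro add_nonneg_nonneg mult_nonneg_nonneg) auto
  have id: "-(Poly Mi La La x1 x2 x3 t) = (8) * (g1 * g1 * g3 * g5 * g5 * g6) + (69005/1728) * (g5 * g8 * g8 * g8 * g9) + (21887/768) * (g1 * g6 * g6 * g8 * g8) + (44813/3456) * (g5 * g7 * g8 * g8 * g8 * g9) + (22579/6912) * (g1 * g6 * g6 * g8 * g8 * g8) + (9575/13824) * (g3 * g6 * g7 * g8 * g8 * g8) + (87689/1728) * (g3 * g6 * g7 * g7) + (19969/216) * (g5 * g7 * g8 * g8 * g9) + (18157/720) * (g1 * g7 * g7 * g8 * g8) + (130853/10368) * (g3 * g7 * g7 * g8 * g8 * g10) + (20/3) * (g1 * g3 * g3 * g3 * g5 * g6) + (64/3) * (g1 * g3 * g5) + (9/4) * (g1 * g1 * g6 * g6 * g6 * g6) + (198001/13824) * (g1 * g6 * g6 * g6 * g7 * g8) + (388333/6912) * (g5 * g6 * g6 * g8 * g8) + (1367129/34560) * (g1 * g6 * g7 * g7 * g8) + (455/64) * (g3 * g6 * g6 * g6 * g8 * g8) + (11215/864) * (g5 * g8 * g8 * g9) + (77/4) * (g3 * g6 * g6 *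 g6 * g7) + (110413/1152) * (g3 * g6 * g7 * g8) + (239/24) * (g3 * g6 * g6 * g6 * g7 * g7) + (14411/432) * (g1 * g8 * g8) + (71275/1728) * (g5 * g6 * g8 * g8) + (964657/6912) * (g5 * g6 * g6 * g7 * g8) + (15923/1152) * (g1 * g6 * g7 * g8) + (3/4) * (g1 * g6 * g6 * g6 * g6) + (58793/1080) * (g1 * g7 * g8 * g8) + (53261/1728) * (g3 * g6 * g6 * g7 * g7) + (239/12) * (g3 * g6 * g6 * g6 * g7 * g8) + (77/4) * (g3 * g6 * g6 * g6 * g8) + (19601/6912) * (g1 * g7 * g7 * g7 * g8 * g8) + (19601/6912) * (g1 * g6 * g6 * g7 * g7 * g7) + (91/4) * (g3 * g6 * g6 * g7) + (57631/1080) * (g1 * g7 * g7 * g8) + (732133/8640) * (g1 * g6 * g7 * g8 * g8) + (19601/3456) * (g1 * g6 * g7 * g7 * g7 * g8) + (44335/6912) * (g3 * g6 * g7 * g7 * g7 * g7) + (146959/10368) * (g5 * g7 * g7 * g8 * g8 * g9) + (19343/216) * (g3 * g7 * g7 * g8 * g10) + (12745/432) * (g1 * g7 * g7) + (53945/1728) * (g1 * g6 * g6 * g7 * g7 * g8) + (4039/96) * (g5 * g6 * g6 * g7 * g7) + (5/3) * (g1 * g3 * g6 * g6 * g6 * g9) + (62317/13824) * (g1 * g6 * g6 * g6 * g8 * g8) + (53/3) * (g1 * g3 * g3) + (88) * (g1 * g7) + (92) * (g1 * g8) + (46693/3456) * (g3 * g6 * g6 * g7 * g7 * g7) + (88613/6912)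 * (g3 * g6 * g6 * g7 * g8 * g8) + (87553/3456) * (g3 * g6 * g6 * g7 * g7 * g8) + (3/2) * (g3 * g3 * g3 * g3) + (17243/3456) * (g1 * g6 * g6 * g6 * g7 * g7) + (89929/3456) * (g5 * g6 * g7 * g8 * g8 * g8) + (90539/13824) * (g5 * g6 * g6 * g8 * g8 * g8) + (25925/13824) * (g3 * g6 * g7 * g7 * g7 * g8) + (41933/6912) * (g5 * g6 * g8 * g8 * g8 * g8) + (62731/1728) * (g1 * g7 * g7 * g7) + (59825/1728) * (g1 * g8 * g8 * g8) + (77/24) * (g3 * g7 * g7 * g7 * g7) + (7/6) * (g5 * g5 * g5 * g5) + (82255/3456) * (g5 * g6 * g7 * g7 * g8 * g8) + (80741/6912) * (g0 * g1 * g6 * g7 * g8 * g8) + (43/3) * (g1 * g5 * g5) + (22579/6912) * (g1 * g7 * g7 * g8 * g8 * g8) + (547/192) * (g5 * g6 * g6 * g6 * g8 * g8) + (47791/3456) * (g3 * g7 * g7 * g7 * g8 * g10) + (69/4) * (g3 * g6 * g6 * g8) + (2015/13824) * (g5 * g6 * g6 * g7 * g7 * g8) + (73387/3456) * (g1 * g6 * g6 * g7 * g8) + (60895/1728) * (g3 * g7 * g7 * g7 * g10) + (725/864) * (g3 * g7 * g7 * g10) + gB * gt"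
    unfolding Poly_def AK_def costK.simps QK.simps piK.simps NK.simps gt_def gB_def g0_def g1_def g3_def g5_def g6_def g7_def g8_def g9_def g10_def by algebra
  have nn: "0 \<le> (8) * (g1 * g1 * g3 * g5 * g5 * g6) + (69005/1728) * (g5 * g8 * g8 * g8 * g9) + (21887/768) * (g1 * g6 * g6 * g8 * g8) + (44813/3456) * (g5 * g7 * g8 * g8 * g8 * g9) + (22579/6912) * (g1 * g6 * g6 * g8 * g8 * g8) + (9575/13824) * (g3 * g6 * g7 * g8 * g8 * g8) + (87689/1728) * (g3 * g6 * g7 * g7) + (19969/216) * (g5 * g7 * g8 * g8 * g9) + (18157/720) * (g1 * g7 * g7 * g8 * g8) + (130853/10368) * (g3 * g7 * g7 * g8 * g8 * g10) + (20/3) * (g1 * g3 * g3 * g3 * g5 * g6) + (64/3) * (g1 * g3 * g5) + (9/4) * (g1 * g1 * g6 * g6 * g6 * g6) + (198001/13824) * (g1 * g6 * g6 * g6 * g7 * g8) + (388333/6912) * (g5 * g6 * g6 * g8 * g8) + (1367129/34560) * (g1 * g6 * g7 * g7 * g8) + (455/64) * (g3 * g6 * g6 * g6 * g8 * g8) + (11215/864) * (g5 * g8 * g8 * g9) + (77/4) * (g3 * g6 * g6 * g6 * g7) + (110413/1152) * (g3 * g6 * g7 * g8) + (239/24) * (g3 * g6 * g6 * g6 * g7 * g7) + (14411/432) * (g1 * g8 * g8) + (71275/1728) * (g5 * g6 * g8 * g8) + (964657/6912) * (g5 * g6 * g6 * g7 * g8) + (15923/1152) * (g1 * g6 * g7 *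 g8) + (3/4) * (g1 * g6 * g6 * g6 * g6) + (58793/1080) * (g1 * g7 * g8 * g8) + (53261/1728) * (g3 * g6 * g6 * g7 * g7) + (239/12) * (g3 * g6 * g6 * g6 * g7 * g8) + (77/4) * (g3 * g6 * g6 * g6 * g8) + (19601/6912) * (g1 * g7 * g7 * g7 * g8 * g8) + (19601/6912) * (g1 * g6 * g6 * g7 * g7 * g7) + (91/4) * (g3 * g6 * g6 * g7) + (57631/1080) * (g1 * g7 * g7 * g8) + (732133/8640) * (g1 * g6 * g7 * g8 * g8) + (19601/3456) * (g1 * g6 * g7 * g7 * g7 * g8) + (44335/6912) * (g3 * g6 * g7 * g7 * g7 * g7) + (146959/10368) * (g5 * g7 * g7 * g8 * g8 * g9) + (19343/216) * (g3 * g7 * g7 * g8 * g10) + (12745/432) * (g1 * g7 * g7) + (53945/1728) * (g1 * g6 * g6 * g7 * g7 * g8) + (4039/96) * (g5 * g6 * g6 * g7 * g7) + (5/3) * (g1 * g3 * g6 * g6 * g6 * g9) + (62317/13824) * (g1 * g6 * g6 * g6 * g8 * g8) + (53/3) * (g1 * g3 * g3) + (88) * (g1 * g7) + (92) * (g1 * g8) + (46693/3456) * (g3 * g6 * g6 * g7 * g7 * g7) + (88613/6912) * (g3 * g6 * g6 * g7 * g8 * g8) + (87553/3456) * (g3 * g6 * g6 * g7 * g7 * g8) + (3/2) * (g3 * g3 * g3 * g3) + (17243/3456) * (g1 * g6 * g6 * g6 * g7 * g7) + (89929/3456) * (g5 * g6 * g7 * g8 * g8 * g8) + (90539/13824) *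 (g5 * g6 * g6 * g8 * g8 * g8) + (25925/13824) * (g3 * g6 * g7 * g7 * g7 * g8) + (41933/6912) * (g5 * g6 * g8 * g8 * g8 * g8) + (62731/1728) * (g1 * g7 * g7 * g7) + (59825/1728) * (g1 * g8 * g8 * g8) + (77/24) * (g3 * g7 * g7 * g7 * g7) + (7/6) * (g5 * g5 * g5 * g5) + (82255/3456) * (g5 * g6 * g7 * g7 * g8 * g8) + (80741/6912) * (g0 * g1 * g6 * g7 * g8 * g8) + (43/3) * (g1 * g5 * g5) + (22579/6912) * (g1 * g7 * g7 * g8 * g8 * g8) + (547/192) * (g5 * g6 * g6 * g6 * g8 * g8) + (47791/3456) * (g3 * g7 * g7 * g7 * g8 * g10) + (69/4) * (g3 * g6 * g6 * g8) + (2015/13824) * (g5 * g6 * g6 * g7 * g7 * g8) + (73387/3456) * (g1 * g6 * g6 * g7 * g8) + (60895/1728) * (g3 * g7 * g7 * g7 * g10) + (725/864) * (g3 * g7 * g7 * g10) + gB * gt"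
    by (intro add_nonneg_nonneg mult_nonneg_nonneg divide_nonneg_nonneg zero_le_numeral zero_le_one nt nB n0 n1 n3 n5 n6 n7 n8 n9 n10)
  show ?thesis using id nn by linarith
qed

lemma sorted_case:
  assumes "rk k1 \<le> rk k2" "rk k2 \<le> rk k3" "okK k1 x1" "okK k2 x2" "okK k3 x3" "triC x1 x2 x3 t"
  shows "Poly k1 k2 k3 x1 x2 x3 t \<le> 0"
  using assms by (cases k1; cases k2; cases k3)
    (simp_all add: c_mmm c_mms c_mml c_mss c_msl c_mll c_sss c_ssl c_sll c_lll)

lemma all_case:
  assumes "okK k1 x1" "okK k2 x2" "okK k3 x3" "triC x1 x2 x3 t"
  shows "Poly k1 k2 k3 x1 x2 x3 t \<le> 0"
proof -
  define P where "P = (\<lambda>k1 k2 k3 x1 x2 x3. okK k1 x1 \<and> okK k2 x2 \<and> okK k3 x3 \<and> triC x1 x2 x3 t \<longrightarrow> Poly k1 k2 k3 x1 x2 x3 t \<le> 0)"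
  have s12: "P a b c p q r \<longleftrightarrow> P b a c q p r" for a b c p q r
    unfolding P_def Poly_sym12[of a b c p q r t] using triC_12[of p q r t] triC_12[of q p r t] by blast
  have s23: "P a b c p q r \<longleftrightarrow> P a c b p r q" for a b c p q r
    unfolding P_def Poly_sym23[of a b c p q r t] using triC_23[of p q r t] triC_23[of p r q t] by blast
  have srt: "P a b c p q r" if "rk a \<le> rk b" "rk b \<le> rk c" for a b c p q r
    unfolding P_def using sorted_case that by blast
  have "P k1 k2 k3 x1 x2 x3"
  proof -
    consider "rk k1 \<le> rk k2" "rk k2 \<le> rk k3" | "rk k1 \<le> rk k3" "rk k3 \<le> rk k2"
      | "rk k2 \<le> rk k1" "rk k1 \<le> rk k3" | "rk k2 \<le> rk k3" "rk k3 \<le> rk k1"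
      | "rk k3 \<le> rk k1" "rk k1 \<le> rk k2" | "rk k3 \<le> rk k2" "rk k2 \<le> rk k1" by linarith
    then show ?thesis
    proof cases
      case 1 then show ?thesis using srt by blast
    next
      case 2 then show ?thesis using s23[of k1 k2 k3 x1 x2 x3] srt[of k1 k3 k2 x1 x3 x2] by blast
    next
      case 3 then show ?thesis using s12[of k1 k2 k3 x1 x2 x3] srt[of k2 k1 k3 x2 x1 x3] by blast
    next
      case 4 then show ?thesis using s12[of k1 k2 k3 x1 x2 x3] s23[of k2 k1 k3 x2 x1 x3] srt[of k2 k3 k1 x2 x3 x1] by blast
    next
      case 5 then show ?thesis using s23[of k1 k2 k3 x1 x2 x3] s12[of k1 k3 k2 x1 x3 x2] srt[of k3 k1 k2 x3 x1 x2] by blast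
    next
      case 6 then show ?thesis using s12[of k1 k2 k3 x1 x2 x3] s23[of k2 k1 k3 x2 x1 x3] s12[of k2 k3 k1 x2 x3 x1] srt[of k3 k2 k1 x3 x2 x1] by blast
    qed
  qed
  then show ?thesis unfolding P_def using assms by blast
qed

lemma sum4:
  fixes z :: "'b \<Rightarrow> real"
  assumes fin: "finite F" and s0: "(\<Sum>S\<in>F. z S) = 1"
    and sa: "(\<Sum>S\<in>{S\<in>F. P S}. z S) = a" and sb: "(\<Sum>S\<in>{S\<in>F. R S}. z S) = b"
    and sc: "(\<Sum>S\<in>{S\<in>F. P S \<and> R S}. z S) = c"
  shows "(\<Sum>S\<in>F. z S * h (P S) (R S)) =
     h False False * (1 - a - b + c) + h True False * (a - c) + h False True * (b - c) + h True True * c"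
proof -
  define i :: "bool \<Rightarrow> real" where "i = (\<lambda>B. if B then 1 else 0)"
  have s: "(\<Sum>S\<in>F. z S * i (Q S)) = (\<Sum>S\<in>{S\<in>F. Q S}. z S)" for Q
    unfolding sum.inter_filter[OF fin] i_def by (rule sum.cong) auto
  have "(\<Sum>S\<in>F. z S * h (P S) (R S)) = (\<Sum>S\<in>F. h False False * z S
        + (h True False - h False False) * (z S * i (P S))
        + (h False True - h False False) * (z S * i (R S))
        + (h True True - h True False - h False True + h False False) * (z S * i (P S \<and> R S)))"
    by (rule sum.cong[OF refl]) (auto simp: i_def algebra_simps)
  also have "\<dots> = h False False * (\<Sum>S\<in>F. z S)
        + (h True False - h False False) * (\<Sum>S\<in>F. z S * i (P S))
        + (h False True - h False False) * (\<Sum>S\<in>F. z S * i (R S))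
        + (h True True - h True False - h False True + h False False) * (\<Sum>S\<in>F. z S * i (P S \<and> R S))"
    by (simp add: sum.distrib sum_distrib_left)
  also have "\<dots> = h False False * 1 + (h True False - h False False) * a
        + (h False True - h False False) * b
        + (h True True - h True False - h False True + h False False) * c"
    unfolding s s0 sa sb sc by simp
  finally show ?thesis by (simp add: algebra_simps)
qed

definition kindOf :: "'a set set \<Rightarrow> ('a set \<Rightarrow> real) \<Rightarrow> 'a set \<Rightarrow> kind" where
  "kindOf Ep x e = (if e \<in> Ep then (if x e \<le> 2/5 then Sm else La) else Mi)"

fun ipf :: "kind \<Rightarrow> real \<Rightarrow> bool \<Rightarrow> real" where
  "ipf Mi y b = y"
| "ipf Sm y b = 1"
| "ipf La y b = (if b then 1 else 0)"

definition BK :: "kind \<Rightarrow> real \<Rightarrow> real" where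
  "BK k t = (if k = Mi then budget_minus t else budget_plus t)"

lemma BK_N: assumes "0 \<le> t" shows "BK k t * (22 * (1 + t)) = NK k t"
proof -
  have "1 + t \<noteq> 0" using assms by linarith
  then show ?thesis
    by (cases k) (simp_all add: BK_def budget_minus_def budget_plus_def alpha_def field_simps power2_eq_square)
qed

lemma incl_ipf: "incl_prob Ep x p S q = ipf (kindOf Ep x {p,q}) (1 - x {p,q}) (q \<in> S)"
  unfolding incl_prob_def kindOf_def by auto

lemma budget_BK: "budget Ep x q r = BK (kindOf Ep x {q,r}) (x {q,r})"
  unfolding budget_def BK_def kindOf_def by auto

lemma pivot:
  assumes fin: "finite V" and feas: "cluster_LP_feasible V z x"
    and inV: "p \<in> V" "q \<in> V" "r \<in> V" and dist: "p \<noteq> q" "p \<noteq> r" "q \<noteq> r"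
  defines "t \<equiv> (\<Sum>S\<in>{S. S \<subseteq> V \<and> p \<in> S \<and> q \<in> S \<and> r \<in> S}. z S)"
  shows "cost_piv V Ep z x p q r = costK (kindOf Ep x {p,q}) (kindOf Ep x {p,r}) (kindOf Ep x {q,r}) (1 - x {p,q}) (1 - x {p,r}) t"
    and "delta_piv V Ep z x p q r = AK (kindOf Ep x {p,q}) (kindOf Ep x {p,r}) (1 - x {p,q}) (1 - x {p,r}) t * BK (kindOf Ep x {q,r}) (x {q,r})"
    and "0 \<le> t" "t \<le> 1 - x {p,q}" "t \<le> 1 - x {p,r}" "0 \<le> x {p,q} + x {p,r} - 1 + t"
proof -
  define F where "F = {S. S \<subseteq> V \<and> p \<in> S}"
  have finF: "finite F" unfolding F_def using fin by simp
  have nn: "\<And>S. S \<in> F \<Longrightarrow> 0 \<le> z S" using feas unfolding cluster_LP_feasible_def F_def by blast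
  have s0: "(\<Sum>S\<in>F. z S) = 1" using feas inV unfolding cluster_LP_feasible_def F_def by blast
  have eqa: "{S\<in>F. q \<in> S} = {S. S \<subseteq> V \<and> {p,q} \<subseteq> S}" unfolding F_def by auto
  have eqb: "{S\<in>F. r \<in> S} = {S. S \<subseteq> V \<and> {p,r} \<subseteq> S}" unfolding F_def by auto
  have eqc: "{S\<in>F. q \<in> S \<and> r \<in> S} = {S. S \<subseteq> V \<and> p \<in> S \<and> q \<in> S \<and> r \<in> S}" unfolding F_def by auto
  have sa: "(\<Sum>S\<in>{S\<in>F. q \<in> S}. z S) = 1 - x {p,q}"
    unfolding eqa using feas inV dist unfolding cluster_LP_feasible_def by blast
  have sb: "(\<Sum>S\<in>{S\<in>F. r \<in> S}. z S) = 1 - x {p,r}"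
    unfolding eqb using feas inV dist unfolding cluster_LP_feasible_def by blast
  have sc: "(\<Sum>S\<in>{S\<in>F. q \<in> S \<and> r \<in> S}. z S) = t"
    unfolding eqc t_def by simp
  note S4 = sum4[OF finF s0 sa sb sc]
  define k1 where "k1 = kindOf Ep x {p,q}"
  define k2 where "k2 = kindOf Ep x {p,r}"
  define y1 where "y1 = 1 - x {p,q}"
  define y2 where "y2 = 1 - x {p,r}"
  define hc where "hc = (\<lambda>b1 b2. let pv = ipf k1 y1 b1; pw = ipf k2 y2 b2 in
           if {q,r} \<in> Ep then pv * (1 - pw) + (1 - pv) * pw else pv * pw)"
  have "cost_piv V Ep z x p q r = (\<Sum>S\<in>F. z S * hc (q \<in> S) (r \<in> S))"
    unfolding cost_piv_def F_def incl_ipf k1_def k2_def y1_def y2_def hc_def by simp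
  also have "\<dots> = costK k1 k2 (kindOf Ep x {q,r}) y1 y2 t"
    unfolding S4 unfolding y1_def[symmetric] y2_def[symmetric] hc_def
    by (cases k1; cases k2; simp add: kindOf_def Let_def algebra_simps)
  finally show "cost_piv V Ep z x p q r = costK (kindOf Ep x {p,q}) (kindOf Ep x {p,r}) (kindOf Ep x {q,r}) (1 - x {p,q}) (1 - x {p,r}) t"
    unfolding k1_def k2_def y1_def y2_def .
  define hd where "hd = (\<lambda>b1 b2. 1 - (1 - ipf k1 y1 b1) * (1 - ipf k2 y2 b2))"
  have "delta_piv V Ep z x p q r = (\<Sum>S\<in>F. z S * hd (q \<in> S) (r \<in> S)) * BK (kindOf Ep x {q,r}) (x {q,r})"
    unfolding delta_piv_def F_def incl_ipf k1_def k2_def y1_def y2_def budget_BK hd_def by simp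
  also have "(\<Sum>S\<in>F. z S * hd (q \<in> S) (r \<in> S)) = AK k1 k2 y1 y2 t"
    unfolding S4 unfolding y1_def[symmetric] y2_def[symmetric] hd_def
    by (cases k1; cases k2; simp add: AK_def algebra_simps)
  finally show "delta_piv V Ep z x p q r = AK (kindOf Ep x {p,q}) (kindOf Ep x {p,r}) (1 - x {p,q}) (1 - x {p,r}) t * BK (kindOf Ep x {q,r}) (x {q,r})"
    unfolding k1_def k2_def y1_def y2_def .
  have F3: "{S. S \<subseteq> V \<and> p \<in> S \<and> q \<in> S \<and> r \<in> S} \<subseteq> F" unfolding F_def by auto
  show "0 \<le> t" unfolding t_def using nn F3 by (intro sum_nonneg) blast
  define h1 where "h1 = (\<lambda>b1 b2. if b1 \<and> \<not> b2 then 1 else (0::real))"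
  have "0 \<le> (\<Sum>S\<in>F. z S * h1 (q \<in> S) (r \<in> S))"
    using nn by (intro sum_nonneg) (simp add: h1_def)
  then show "t \<le> 1 - x {p,q}" unfolding S4 unfolding h1_def by simp
  define h2 where "h2 = (\<lambda>b1 b2. if \<not> b1 \<and> b2 then 1 else (0::real))"
  have "0 \<le> (\<Sum>S\<in>F. z S * h2 (q \<in> S) (r \<in> S))"
    using nn by (intro sum_nonneg) (simp add: h2_def)
  then show "t \<le> 1 - x {p,r}" unfolding S4 unfolding h2_def by simp
  define h3 where "h3 = (\<lambda>b1 b2. if \<not> b1 \<and> \<not> b2 then 1 else (0::real))"
  have "0 \<le> (\<Sum>S\<in>F. z S * h3 (q \<in> S) (r \<in> S))"
    using nn by (intro sum_nonneg) (simp add: h3_def)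
  then show "0 \<le> x {p,q} + x {p,r} - 1 + t" unfolding S4 unfolding h3_def by simp
qed

lemma scale_abs:
  fixes c a1 a2 a3 b1 b2 b3 x1 x2 x3 :: real
  shows "(c - a3*b3 - a2*b2 - a1*b1)*(22*(1+x1)*(1+x2)*(1+x3)) =
    c*(22*(1+x1)*(1+x2)*(1+x3)) - a3*(b3*(22*(1+x3)))*((1+x1)*(1+x2))
    - a2*(b2*(22*(1+x2)))*((1+x1)*(1+x3)) - a1*(b1*(22*(1+x1)))*((1+x2)*(1+x3))"
  by algebra

lemma scale:
  assumes "0 \<le> x1" "0 \<le> x2" "0 \<le> x3" "Poly k1 k2 k3 x1 x2 x3 t \<le> 0"
  shows "costK k1 k2 k3 (1-x1) (1-x2) t + costK k1 k3 k2 (1-x1) (1-x3) t + costK k2 k3 k1 (1-x2) (1-x3) t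
     \<le> AK k1 k2 (1-x1) (1-x2) t * BK k3 x3 + AK k1 k3 (1-x1) (1-x3) t * BK k2 x2 + AK k2 k3 (1-x2) (1-x3) t * BK k1 x1"
proof -
  define c where "c = costK k1 k2 k3 (1-x1) (1-x2) t + costK k1 k3 k2 (1-x1) (1-x3) t + costK k2 k3 k1 (1-x2) (1-x3) t"
  define G where "G = c - AK k1 k2 (1-x1) (1-x2) t * BK k3 x3 - AK k1 k3 (1-x1) (1-x3) t * BK k2 x2 - AK k2 k3 (1-x2) (1-x3) t * BK k1 x1"
  have "G * (22*(1+x1)*(1+x2)*(1+x3)) = Poly k1 k2 k3 x1 x2 x3 t"
    unfolding G_def scale_abs BK_N[OF assms(1)] BK_N[OF assms(2)] BK_N[OF assms(3)] Poly_def c_def ..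
  then have "G * (22*(1+x1)*(1+x2)*(1+x3)) \<le> 0" using assms(4) by simp
  moreover have "0 < 22*(1+x1)*(1+x2)*(1+x3)" using assms(1-3) by simp
  ultimately have "G \<le> 0"
  proof -
    assume a: "G * (22*(1+x1)*(1+x2)*(1+x3)) \<le> 0" "0 < 22*(1+x1)*(1+x2)*(1+x3)"
    show "G \<le> 0"
    proof (rule ccontr)
      assume "\<not> G \<le> 0"
      then have "0 < G * (22*(1+x1)*(1+x2)*(1+x3))" using a(2) by (simp add: mult_pos_pos)
      then show False using a(1) by linarith
    qed
  qed
  then show ?thesis unfolding G_def c_def by linarith
qed

theorem lemma4:
  fixes V :: "'a set" and Ep :: "'a set set"
    and z :: "'a set \<Rightarrow> real" and x :: "'a set \<Rightarrow> real"
    and u v w :: 'a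
  assumes "finite V"
    and "Ep \<subseteq> {{a, b} | a b. a \<in> V \<and> b \<in> V \<and> a \<noteq> b}"
    and "cluster_LP_feasible V z x"
    and "u \<in> V" "v \<in> V" "w \<in> V"
    and "u \<noteq> v" "u \<noteq> w" "v \<noteq> w"
  shows "cost_tri V Ep z x u v w \<le> delta_tri V Ep z x u v w"
proof -
  define t where "t = (\<Sum>S\<in>{S. S \<subseteq> V \<and> u \<in> S \<and> v \<in> S \<and> w \<in> S}. z S)"
  have tv: "(\<Sum>S\<in>{S. S \<subseteq> V \<and> v \<in> S \<and> u \<in> S \<and> w \<in> S}. z S) = t"
    unfolding t_def by (rule sum.cong) auto
  have tw: "(\<Sum>S\<in>{S. S \<subseteq> V \<and> w \<in> S \<and> u \<in> S \<and> v \<in> S}. z S) = t"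
    unfolding t_def by (rule sum.cong) auto
  have e: "{v,u} = {u,v}" "{w,u} = {u,w}" "{w,v} = {v,w}" by auto
  note Pu = pivot(1-2)[OF assms(1,3,4,5,6,7,8,9), where Ep=Ep, folded t_def] pivot(3-6)[OF assms(1,3,4,5,6,7,8,9), folded t_def]
  note Pv = pivot(1-2)[OF assms(1,3,5,4,6) assms(7)[symmetric] assms(9,8), where Ep=Ep, unfolded tv e] pivot(3-6)[OF assms(1,3,5,4,6) assms(7)[symmetric] assms(9,8), unfolded tv e]
  note Pw = pivot(1-2)[OF assms(1,3,6,4,5) assms(8)[symmetric] assms(9)[symmetric] assms(7), where Ep=Ep, unfolded tw e] pivot(3-6)[OF assms(1,3,6,4,5) assms(8)[symmetric] assms(9)[symmetric] assms(7), unfolded tw e]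
  define x1 where "x1 = x {u,v}"
  define x2 where "x2 = x {u,w}"
  define x3 where "x3 = x {v,w}"
  define k1 where "k1 = kindOf Ep x {u,v}"
  define k2 where "k2 = kindOf Ep x {u,w}"
  define k3 where "k3 = kindOf Ep x {v,w}"
  note defs = x1_def[symmetric] x2_def[symmetric] x3_def[symmetric] k1_def[symmetric] k2_def[symmetric] k3_def[symmetric]
  note Pu' = Pu[unfolded defs] and Pv' = Pv[unfolded defs] and Pw' = Pw[unfolded defs]
  have ct: "cost_tri V Ep z x u v w = costK k1 k2 k3 (1-x1) (1-x2) t + costK k1 k3 k2 (1-x1) (1-x3) t + costK k2 k3 k1 (1-x2) (1-x3) t"
    unfolding cost_tri_def Pu'(1) Pv'(1) Pw'(1) ..
  have dt: "delta_tri V Ep z x u v w = AK k1 k2 (1-x1) (1-x2) t * BK k3 x3 + AK k1 k3 (1-x1) (1-x3) t * BK k2 x2 + AK k2 k3 (1-x2) (1-x3) t * BK k1 x1"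
    unfolding delta_tri_def Pu'(2) Pv'(2) Pw'(2) ..
  have tri: "triC x1 x2 x3 t" unfolding triC_def using Pu'(3-6) Pv'(3-6) Pw'(3-6) by linarith
  have b: "0 \<le> x1" "x1 \<le> 1" "0 \<le> x2" "x2 \<le> 1" "0 \<le> x3" "x3 \<le> 1"
    using tri unfolding triC_def by linarith+
  have ok1: "okK k1 x1" using b unfolding okK_def k1_def x1_def kindOf_def by auto
  have ok2: "okK k2 x2" using b unfolding okK_def k2_def x2_def kindOf_def by auto
  have ok3: "okK k3 x3" using b unfolding okK_def k3_def x3_def kindOf_def by auto
  have "Poly k1 k2 k3 x1 x2 x3 t \<le> 0" by (rule all_case[OF ok1 ok2 ok3 tri])
  then show ?thesis unfolding ct dt using scale b by blast
qed

end
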